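(* Let $K\ge2$, $\sigma^2>0$, $\bm\theta\in\Theta$, and let $(\beta_K,\beta_{K-1},\dots,\beta_2)$ be nonnegative batch weights summing to $1$. Then the batched arm elimination design $\mathtt{BAE}$ with these weights satisfies $$\mathfrak e^{\mathtt{BAE}}_{\bm\theta}\ \ge\ \min_{n\in\{K,K-1,\dots,2\}} w_n\,\Gamma_{\bm\theta,n}.$$
   Context: Sampling model: $K$ arms with unknown $\bm\theta\in\mathbb{R}^K$; potential outcomes $Y_{t,i}$ ($t\in[T]$, $i\in[K]$) are independent with $Y_{t,i}\sim\mathcal N(\theta_i,\sigma^2)$, $\sigma^2>0$ known. A policy chooses $I_t$ based on the past history of chosen arms and observed outcomes, observes only $Y_{t,I_t}$, and outputs a deployed arm $\hat I_T$ after $T$ units. $\Theta$: set of $\bm\theta$ with a unique best arm $I^*=\arg\max_i\theta_i$. Regret: $\mathfrak R^\pi_{\bm\theta,T}=\max_i\theta_i-\mathbb E^\pi_{\bm\theta,T}[\theta_{\hat I_T}]$; efficiency exponent $\mathfrak e^\pi_{\bm\theta}=\liminf_{T\to\infty}-\frac1T\ln\mathfrak R^\pi_{\bm\theta,T}$. Batched arm elimination (BAE) with weights $(\beta_K,\dots,\beta_2)$: maintain a candidate set $C$, initially $[K]$. Let $N_{t,i}$ be the number of units among the first $t$ assigned to arm $i$ and $m_{t,i}$ the empirical mean of the observed outcomes of arm $i$ among them ($0$ if $N_{t,i}=0$). For $t=1,\dots,T$: assign $I_t\in\arg\min_{i\in C}N_{t-1,i}$ (round robin, ties broken arbitrarily).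 For $n=K,K-1,\dots,2$ let $T_n=(\beta_K+\dots+\beta_n)T$ (rounded to an integer); at time $t=T_n$ (processing $n$ in decreasing order when several $T_n$ coincide), the current candidate set $C_n$ has $n$ arms and an arm $\ell_n\in\arg\min_{i\in C_n}m_{t,i}$ is removed from $C$. The output $\hat I_T$ is the single remaining arm. Define $w_n=\frac{\beta_K}{K}+\frac{\beta_{K-1}}{K-1}+\dots+\frac{\beta_n}{n}$. Let $\mathcal J_{\bm\theta,n}=\{J\subseteq[K]:|J|=n,\ I^*\in J\}$, $\Lambda_{\bm\theta,J}=\{\bm\lambda\in\mathbb R^K:\lambda_{I^*}\le\min_{i\in J}\lambda_i\}$, and $$\Gamma_{\bm\theta,n}=\min_{J\in\mathcal J_{\bm\theta,n}}\ \inf_{\bm\lambda\in\Lambda_{\bm\theta,J}}\sum_{i\in J}\frac{(\lambda_i-\theta_i)^2}{2\sigma^2}.$$ *)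

theory Defs
  imports "HOL-Probability.Probability"
begin

text \<open>Arms are indexed by 0,...,K-1; units by 1..T, where the outcome of unit t
  on arm i is Y (t-1, i). The noise standard deviation is sigma (variance sigma^2).\<close>

definition unique_best :: "nat \<Rightarrow> (nat \<Rightarrow> real) \<Rightarrow> bool" where
  "unique_best K \<theta> \<longleftrightarrow> (\<exists>i<K. \<forall>j<K. j \<noteq> i \<longrightarrow> \<theta> j < \<theta> i)"

definition best_arm :: "nat \<Rightarrow> (nat \<Rightarrow> real) \<Rightarrow> nat" where
  "best_arm K \<theta> = (THE i. i < K \<and> (\<forall>j<K. j \<noteq> i \<longrightarrow> \<theta> j < \<theta> i))"

definition wgt :: "nat \<Rightarrow> (nat \<Rightarrow> real) \<Rightarrow> nat \<Rightarrow> real" where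
  "wgt K \<beta> n = (\<Sum>m\<in>{n..K}. \<beta> m / real m)"

definition Gamma :: "nat \<Rightarrow> real \<Rightarrow> (nat \<Rightarrow> real) \<Rightarrow> nat \<Rightarrow> real" where
  "Gamma K \<sigma> \<theta> n =
     Min ((\<lambda>J. Inf ((\<lambda>lam. \<Sum>i\<in>J. (lam i - \<theta> i)\<^sup>2 / (2 * \<sigma>\<^sup>2)) `
                     {lam. \<forall>i\<in>J. lam (best_arm K \<theta>) \<le> lam i}))
          ` {J. J \<subseteq> {..<K} \<and> card J = n \<and> best_arm K \<theta> \<in> J})"

definition elim_time :: "nat \<Rightarrow> (nat \<Rightarrow> real) \<Rightarrow> nat \<Rightarrow> nat \<Rightarrow> nat" where
  "elim_time K \<beta> T n = nat \<lfloor>(\<Sum>m\<in>{n..K}. \<beta> m) * real T\<rfloor>"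

text \<open>State: candidate set, counts N, sums of observed outcomes S.\<close>
type_synonym bae_state = "nat set \<times> (nat \<Rightarrow> nat) \<times> (nat \<Rightarrow> real)"

definition emp_mean :: "(nat \<Rightarrow> nat) \<Rightarrow> (nat \<Rightarrow> real) \<Rightarrow> nat \<Rightarrow> real" where
  "emp_mean N S i = (if N i = 0 then 0 else S i / real (N i))"

text \<open>Tie-breaking rules: tb T t A selects an element of the tie set A
  (for assignment at unit t resp. elimination at time t, horizon T).\<close>

definition elim_one ::
  "(nat \<Rightarrow> nat \<Rightarrow> nat set \<Rightarrow> nat) \<Rightarrow> nat \<Rightarrow> (nat \<Rightarrow> real) \<Rightarrow> nat \<Rightarrow> nat \<Rightarrow> bae_state \<Rightarrow> nat \<Rightarrow> bae_state" where
  "elim_one te K \<beta> T t st n =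
     (case st of (C, N, S) \<Rightarrow>
        if elim_time K \<beta> T n = t
        then (C - {te T t {i \<in> C. \<forall>j\<in>C. emp_mean N S i \<le> emp_mean N S j}}, N, S)
        else (C, N, S))"

definition elim_all ::
  "(nat \<Rightarrow> nat \<Rightarrow> nat set \<Rightarrow> nat) \<Rightarrow> nat \<Rightarrow> (nat \<Rightarrow> real) \<Rightarrow> nat \<Rightarrow> nat \<Rightarrow> bae_state \<Rightarrow> bae_state" where
  "elim_all te K \<beta> T t st = foldl (elim_one te K \<beta> T t) st (rev [2..<Suc K])"

definition assign_step ::
  "(nat \<Rightarrow> nat \<Rightarrow> nat set \<Rightarrow> nat) \<Rightarrow> nat \<Rightarrow> nat \<Rightarrow> (nat \<times> nat \<Rightarrow> real) \<Rightarrow> bae_state \<Rightarrow> bae_state" where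
  "assign_step ta T t Y st =
     (case st of (C, N, S) \<Rightarrow>
        let i = ta T (Suc t) {i \<in> C. \<forall>j\<in>C. N i \<le> N j}
        in (C, N(i := Suc (N i)), S(i := S i + Y (t, i))))"

text \<open>bae_run ... t Y = state after the first t units (and eliminations at time t).\<close>
fun bae_run ::
  "(nat \<Rightarrow> nat \<Rightarrow> nat set \<Rightarrow> nat) \<Rightarrow> (nat \<Rightarrow> nat \<Rightarrow> nat set \<Rightarrow> nat) \<Rightarrow> nat \<Rightarrow> (nat \<Rightarrow> real)
    \<Rightarrow> nat \<Rightarrow> (nat \<times> nat \<Rightarrow> real) \<Rightarrow> nat \<Rightarrow> bae_state" where
  "bae_run ta te K \<beta> T Y 0 = elim_all te K \<beta> T 0 ({..<K}, \<lambda>_. 0, \<lambda>_. 0)"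
| "bae_run ta te K \<beta> T Y (Suc t) =
     elim_all te K \<beta> T (Suc t) (assign_step ta T t Y (bae_run ta te K \<beta> T Y t))"

definition bae_output ::
  "(nat \<Rightarrow> nat \<Rightarrow> nat set \<Rightarrow> nat) \<Rightarrow> (nat \<Rightarrow> nat \<Rightarrow> nat set \<Rightarrow> nat) \<Rightarrow> nat \<Rightarrow> (nat \<Rightarrow> real)
    \<Rightarrow> nat \<Rightarrow> (nat \<times> nat \<Rightarrow> real) \<Rightarrow> nat" where
  "bae_output ta te K \<beta> T Y = the_elem (fst (bae_run ta te K \<beta> T Y T))"

definition outcome_measure :: "nat \<Rightarrow> real \<Rightarrow> (nat \<Rightarrow> real) \<Rightarrow> nat \<Rightarrow> (nat \<times> nat \<Rightarrow> real) measure" where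
  "outcome_measure K \<sigma> \<theta> T =
     PiM ({..<T} \<times> {..<K}) (\<lambda>(t, i). density lborel (normal_density (\<theta> i) \<sigma>))"

definition bae_regret ::
  "(nat \<Rightarrow> nat \<Rightarrow> nat set \<Rightarrow> nat) \<Rightarrow> (nat \<Rightarrow> nat \<Rightarrow> nat set \<Rightarrow> nat) \<Rightarrow> nat \<Rightarrow> real \<Rightarrow> (nat \<Rightarrow> real)
    \<Rightarrow> (nat \<Rightarrow> real) \<Rightarrow> nat \<Rightarrow> real" where
  "bae_regret ta te K \<sigma> \<theta> \<beta> T =
     Max (\<theta> ` {..<K}) - (\<integral>Y. \<theta> (bae_output ta te K \<beta> T Y) \<partial>outcome_measure K \<sigma> \<theta> T)"

definition bae_exponent ::
  "(nat \<Rightarrow> nat \<Rightarrow> nat set \<Rightarrow> nat) \<Rightarrow> (nat \<Rightarrow> nat \<Rightarrow> nat set \<Rightarrow> nat) \<Rightarrow> nat \<Rightarrow> real \<Rightarrow> (nat \<Rightarrow> real)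
    \<Rightarrow> (nat \<Rightarrow> real) \<Rightarrow> ereal" where
  "bae_exponent ta te K \<sigma> \<theta> \<beta> =
     liminf (\<lambda>T. ereal (- ln (bae_regret ta te K \<sigma> \<theta> \<beta> T) / real T))"

end

theory Submission
  imports Defs
begin

locale bae_ctx =
  fixes ta te :: "nat \<Rightarrow> nat \<Rightarrow> nat set \<Rightarrow> nat" and K :: nat and \<beta> :: "nat \<Rightarrow> real" and T :: nat
  assumes K2: "K \<ge> 2" and bnn: "\<forall>n\<in>{2..K}. \<beta> n \<ge> 0" and bsum: "(\<Sum>n\<in>{2..K}. \<beta> n) = 1"
    and ta_in: "\<forall>T t A. A \<noteq> {} \<longrightarrow> ta T t A \<in> A"
    and te_in: "\<forall>T t A. A \<noteq> {} \<longrightarrow> te T t A \<in> A"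
begin

abbreviation E :: "nat \<Rightarrow> nat" where "E n \<equiv> elim_time K \<beta> T n"

definition dC :: "(nat \<Rightarrow> nat) \<Rightarrow> nat \<Rightarrow> nat set" where
  "dC p t = {..<K} - p ` {m\<in>{2..K}. E m \<le> t}"

definition msel :: "nat set \<Rightarrow> (nat \<Rightarrow> nat) \<Rightarrow> nat set" where
  "msel C N = {i\<in>C. \<forall>j\<in>C. N i \<le> N j}"

primrec dN :: "(nat \<Rightarrow> nat) \<Rightarrow> nat \<Rightarrow> nat \<Rightarrow> nat" where
  "dN p 0 = (\<lambda>_. 0)"
| "dN p (Suc t) = (dN p t)(ta T (Suc t) (msel (dC p t) (dN p t)) :=
      Suc (dN p t (ta T (Suc t) (msel (dC p t) (dN p t)))))"

definition da :: "(nat \<Rightarrow> nat) \<Rightarrow> nat \<Rightarrow> nat" where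
  "da p t = ta T (Suc t) (msel (dC p t) (dN p t))"

definition dS :: "(nat \<Rightarrow> nat) \<Rightarrow> (nat \<times> nat \<Rightarrow> real) \<Rightarrow> nat \<Rightarrow> nat \<Rightarrow> real" where
  "dS p Y t i = (\<Sum>s\<in>{s. s < t \<and> da p s = i}. Y (s, i))"

definition am :: "nat set \<Rightarrow> (nat \<Rightarrow> nat) \<Rightarrow> (nat \<Rightarrow> real) \<Rightarrow> nat set" where
  "am C N S = {i\<in>C. \<forall>j\<in>C. emp_mean N S i \<le> emp_mean N S j}"

definition J :: "(nat \<Rightarrow> nat) \<Rightarrow> nat \<Rightarrow> nat set" where
  "J p n = {..<K} - p ` {Suc n..K}"

definition Fx :: "(nat \<Rightarrow> nat) \<Rightarrow> (nat \<times> nat \<Rightarrow> real) \<Rightarrow> nat \<Rightarrow> nat" where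
  "Fx p Y n = te T (E n) (am (J p n) (dN p (E n)) (dS p Y (E n)))"

lemma dN_Suc: "dN p (Suc t) = (\<lambda>i. dN p t i + (if i = da p t then 1 else 0))"
  by (auto simp: da_def)

lemma E_mono: assumes "2 \<le> m" "m \<le> m'" "m' \<le> K" shows "E m' \<le> E m"
proof -
  have "(\<Sum>k\<in>{m'..K}. \<beta> k) \<le> (\<Sum>k\<in>{m..K}. \<beta> k)"
    by (rule sum_mono2) (use assms bnn in auto)
  then have "(\<Sum>k\<in>{m'..K}. \<beta> k) * real T \<le> (\<Sum>k\<in>{m..K}. \<beta> k) * real T"
    by (intro mult_right_mono) auto
  then show ?thesis unfolding elim_time_def by (intro nat_mono floor_mono)
qed

lemma E_le_T: assumes "m \<in> {2..K}" shows "E m \<le> T"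
proof -
  have "(\<Sum>k\<in>{m..K}. \<beta> k) \<le> (\<Sum>k\<in>{2..K}. \<beta> k)"
    by (rule sum_mono2) (use assms bnn in auto)
  then have "(\<Sum>k\<in>{m..K}. \<beta> k) * real T \<le> 1 * real T"
    using bsum by (intro mult_right_mono) auto
  then have "\<lfloor>(\<Sum>k\<in>{m..K}. \<beta> k) * real T\<rfloor> \<le> int T" using floor_mono[of _ "real T"] by simp
  then have "\<lfloor>(\<Sum>k\<in>{m..K}. \<beta> k) * real T\<rfloor> \<le> int T"
    by (metis floor_mono floor_of_nat)
  then show ?thesis unfolding elim_time_def by simp
qed

lemma key_set: assumes "n \<in> {2..K}"
  shows "{m\<in>{2..K}. E m < E n} \<union> {m\<in>{2..K}. n < m \<and> E m = E n} = {Suc n..K}"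
proof -
  have "m > n" if "m \<in> {2..K}" "E m < E n" for m
  proof (rule ccontr)
    assume "\<not> n < m" then have "E n \<le> E m" using E_mono[of m n] that assms by auto
    then show False using that by auto
  qed
  moreover have "E m \<le> E n" if "m \<in> {Suc n..K}" for m using E_mono[of n m] that assms by auto
  ultimately show ?thesis using assms by force
qed

lemma fold_elim:
  assumes "sorted_wrt (>) ns"
    and "\<forall>n\<in>set ns. E n = t \<longrightarrow> te T t (am (C - p ` {m\<in>set ns. n < m \<and> E m = t}) N S) = p n"
  shows "foldl (elim_one te K \<beta> T t) (C, N, S) ns = (C - p ` {m\<in>set ns. E m = t}, N, S)"
  using assms
proof (induction ns arbitrary: C)
  case Nil
  then show ?case by simp
next
  case (Cons x xs)
  have lt: "\<forall>y\<in>set xs. y < x" using Cons.prems(1) by simp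
  show ?case
  proof (cases "E x = t")
    case True
    have h0: "te T t (am (C - p ` {m\<in>set (x#xs). x < m \<and> E m = t}) N S) = p x"
      using bspec[OF Cons.prems(2), of x] True by simp
    have e: "{m\<in>set (x # xs). x < m \<and> E m = t} = {}" using lt by auto
    have h: "te T t (am C N S) = p x" using h0 unfolding e by simp
    have step: "elim_one te K \<beta> T t (C, N, S) x = (C - {p x}, N, S)"
      unfolding elim_one_def using True h by (simp add: am_def)
    have IH: "foldl (elim_one te K \<beta> T t) (C - {p x}, N, S) xs
        = (C - {p x} - p ` {m\<in>set xs. E m = t}, N, S)"
    proof (rule Cons.IH)
      show "sorted_wrt (>) xs" using Cons.prems(1) by simp
      show "\<forall>n\<in>set xs. E n = t \<longrightarrow> te T t (am (C - {p x} - p ` {m\<in>set xs. n < m \<and> E m = t}) N S) = p n"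
      proof (intro ballI impI)
        fix n assume n: "n \<in> set xs" "E n = t"
        have "C - {p x} - p ` {m\<in>set xs. n < m \<and> E m = t} = C - p ` {m\<in>set (x#xs). n < m \<and> E m = t}"
          using lt n True by auto
        then show "te T t (am (C - {p x} - p ` {m\<in>set xs. n < m \<and> E m = t}) N S) = p n"
          using Cons.prems(2) n by auto
      qed
    qed
    have "C - {p x} - p ` {m\<in>set xs. E m = t} = C - p ` {m\<in>set (x#xs). E m = t}"
      using True by auto
    then show ?thesis using step IH by simp
  next
    case False
    have step: "elim_one te K \<beta> T t (C, N, S) x = (C, N, S)"
      unfolding elim_one_def using False by simp
    have IH: "foldl (elim_one te K \<beta> T t) (C, N, S) xs = (C - p ` {m\<in>set xs. E m = t}, N, S)"
    proof (rule Cons.IH)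
      show "sorted_wrt (>) xs" using Cons.prems(1) by simp
      show "\<forall>n\<in>set xs. E n = t \<longrightarrow> te T t (am (C - p ` {m\<in>set xs. n < m \<and> E m = t}) N S) = p n"
      proof (intro ballI impI)
        fix n assume n: "n \<in> set xs" "E n = t"
        have "{m\<in>set xs. n < m \<and> E m = t} = {m\<in>set (x#xs). n < m \<and> E m = t}"
          using False by auto
        then show "te T t (am (C - p ` {m\<in>set xs. n < m \<and> E m = t}) N S) = p n"
          using Cons.prems(2) n by auto
      qed
    qed
    have "{m\<in>set xs. E m = t} = {m\<in>set (x#xs). E m = t}" using False by auto
    then show ?thesis using step IH by simp
  qed
qed

lemma elim_all_eq:
  assumes fx: "\<forall>n\<in>{2..K}. p n = Fx p Y n"
    and NS: "N = dN p t" "S = dS p Y t"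
  shows "elim_all te K \<beta> T t ({..<K} - p ` {m\<in>{2..K}. E m < t}, N, S) = (dC p t, N, S)"
proof -
  let ?C = "{..<K} - p ` {m\<in>{2..K}. E m < t}"
  have set_ns: "set (rev [2..<Suc K]) = {2..K}" by auto
  have srt: "sorted_wrt (>) (rev [2..<Suc K])" unfolding sorted_wrt_rev by (rule sorted_wrt_upt)
  have "foldl (elim_one te K \<beta> T t) (?C, N, S) (rev [2..<Suc K]) = (?C - p ` {m\<in>set (rev [2..<Suc K]). E m = t}, N, S)"
  proof (rule fold_elim[OF srt])
    show "\<forall>n\<in>set (rev [2..<Suc K]). E n = t \<longrightarrow> te T t (am (?C - p ` {m\<in>set (rev [2..<Suc K]). n < m \<and> E m = t}) N S) = p n"
    proof (intro ballI impI)
      fix n assume n: "n \<in> set (rev [2..<Suc K])" "E n = t"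
      then have n2: "n \<in> {2..K}" by auto
      have "?C - p ` {m\<in>set (rev [2..<Suc K]). n < m \<and> E m = t}
          = {..<K} - p ` ({m\<in>{2..K}. E m < E n} \<union> {m\<in>{2..K}. n < m \<and> E m = E n})"
        using n(2) set_ns by auto
      also have "\<dots> = J p n" unfolding J_def key_set[OF n2] ..
      finally show "te T t (am (?C - p ` {m\<in>set (rev [2..<Suc K]). n < m \<and> E m = t}) N S) = p n"
        using fx n2 n(2) NS by (simp add: Fx_def)
    qed
  qed
  moreover have "?C - p ` {m\<in>set (rev [2..<Suc K]). E m = t} = dC p t"
  proof -
    have "{m\<in>{2..K}. E m \<le> t} = {m\<in>{2..K}. E m < t} \<union> {m\<in>{2..K}. E m = t}" by auto
    then show ?thesis unfolding dC_def set_ns by auto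
  qed
  ultimately show ?thesis unfolding elim_all_def by simp
qed

lemma assign_eq:
  "assign_step ta T t Y (dC p t, dN p t, dS p Y t) = (dC p t, dN p (Suc t), dS p Y (Suc t))"
proof -
  have "dS p Y (Suc t) = (dS p Y t)(da p t := dS p Y t (da p t) + Y (t, da p t))"
  proof
    fix i
    show "dS p Y (Suc t) i = ((dS p Y t)(da p t := dS p Y t (da p t) + Y (t, da p t))) i"
    proof (cases "i = da p t")
      case True
      have "{s. s < Suc t \<and> da p s = i} = insert t {s. s < t \<and> da p s = i}" using True by auto
      then show ?thesis using True by (simp add: dS_def)
    next
      case False
      have "{s. s < Suc t \<and> da p s = i} = {s. s < t \<and> da p s = i}" using False less_Suc_eq by auto
      then show ?thesis using False by (simp add: dS_def)
    qed
  qed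
  then show ?thesis unfolding assign_step_def by (simp add: Let_def da_def msel_def)
qed

lemma run_eq:
  assumes fx: "\<forall>n\<in>{2..K}. p n = Fx p Y n"
  shows "bae_run ta te K \<beta> T Y t = (dC p t, dN p t, dS p Y t)"
proof (induction t)
  case 0
  have "dS p Y 0 = (\<lambda>_. 0)" by (auto simp: dS_def)
  moreover have "{m\<in>{2..K}. E m < 0} = {}" by auto
  ultimately show ?case using elim_all_eq[OF fx, of "dN p 0" 0 "dS p Y 0"] by simp
next
  case (Suc t)
  have "{m\<in>{2..K}. E m < Suc t} = {m\<in>{2..K}. E m \<le> t}" by auto
  then have hC: "dC p t = {..<K} - p ` {m\<in>{2..K}. E m < Suc t}" unfolding dC_def by simp
  have "bae_run ta te K \<beta> T Y (Suc t) = elim_all te K \<beta> T (Suc t) (assign_step ta T t Y (bae_run ta te K \<beta> T Y t))"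
    by simp
  also have "\<dots> = elim_all te K \<beta> T (Suc t) (dC p t, dN p (Suc t), dS p Y (Suc t))"
    using Suc assign_eq by simp
  also have "\<dots> = (dC p (Suc t), dN p (Suc t), dS p Y (Suc t))"
    unfolding hC by (rule elim_all_eq[OF fx]) auto
  finally show ?case .
qed

end

context bae_ctx begin

lemma dN_local: "(\<forall>s<t0. dC p s = dC p' s) \<Longrightarrow> t \<le> t0 \<Longrightarrow> dN p t = dN p' t"
  by (induction t) auto

lemma da_local: "(\<forall>s<t0. dC p s = dC p' s) \<Longrightarrow> s < t0 \<Longrightarrow> da p s = da p' s"
  unfolding da_def using dN_local[of t0 p p' s] by auto

lemma dS_local: "(\<forall>s<t0. dC p s = dC p' s) \<Longrightarrow> t \<le> t0 \<Longrightarrow> dS p Y t = dS p' Y t"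
proof
  fix i assume h: "\<forall>s<t0. dC p s = dC p' s" "t \<le> t0"
  have "{s. s < t \<and> da p s = i} = {s. s < t \<and> da p' s = i}"
    using da_local[OF h(1)] h(2) by auto
  then show "dS p Y t i = dS p' Y t i" unfolding dS_def by simp
qed

lemma Fx_local:
  assumes n: "n \<in> {2..K}" and agr: "\<forall>m\<in>{Suc n..K}. p m = p' m"
  shows "Fx p Y n = Fx p' Y n"
proof -
  have dc: "\<forall>s<E n. dC p s = dC p' s"
  proof (intro allI impI)
    fix s assume s: "s < E n"
    have "{m\<in>{2..K}. E m \<le> s} \<subseteq> {Suc n..K}"
    proof
      fix m assume m: "m \<in> {m\<in>{2..K}. E m \<le> s}"
      have "\<not> m \<le> n"
      proof
        assume "m \<le> n" then have "E n \<le> E m" using E_mono[of m n] m n by auto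
        then show False using m s by auto
      qed
      then show "m \<in> {Suc n..K}" using m by auto
    qed
    then have "p ` {m\<in>{2..K}. E m \<le> s} = p' ` {m\<in>{2..K}. E m \<le> s}"
      using agr by (intro image_cong) blast+
    then show "dC p s = dC p' s" unfolding dC_def by simp
  qed
  have "p ` {Suc n..K} = p' ` {Suc n..K}" by (rule image_cong) (use agr in auto)
  then have hJ: "J p n = J p' n" unfolding J_def by simp
  show ?thesis unfolding Fx_def hJ dN_local[OF dc le_refl] dS_local[OF dc le_refl] ..
qed

primrec gp :: "(nat \<times> nat \<Rightarrow> real) \<Rightarrow> nat \<Rightarrow> nat \<Rightarrow> nat" where
  "gp Y 0 = (\<lambda>_. 0)"
| "gp Y (Suc k) = (gp Y k)(K - k := Fx (gp Y k) Y (K - k))"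

lemma gp_fix: "k \<le> K - 1 \<Longrightarrow> \<forall>n\<in>{K - k + 1..K}. gp Y k n = Fx (gp Y k) Y n"
proof (induction k)
  case 0
  then show ?case by auto
next
  case (Suc k)
  have IH: "\<forall>n\<in>{K - k + 1..K}. gp Y k n = Fx (gp Y k) Y n" using Suc by auto
  show ?case
  proof
    fix n assume n: "n \<in> {K - Suc k + 1..K}"
    have n2: "n \<in> {2..K}" using n Suc.prems by auto
    have agr: "\<forall>m\<in>{Suc n..K}. gp Y (Suc k) m = gp Y k m" using n Suc.prems by auto
    have eqF: "Fx (gp Y (Suc k)) Y n = Fx (gp Y k) Y n" by (rule Fx_local[OF n2 agr])
    show "gp Y (Suc k) n = Fx (gp Y (Suc k)) Y n"
    proof (cases "n = K - k")
      case True
      then have "gp Y (Suc k) n = Fx (gp Y k) Y n" by simp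
      then show ?thesis using eqF by simp
    next
      case False
      then have "n \<in> {K - k + 1..K}" using n Suc.prems by auto
      then have "gp Y (Suc k) n = Fx (gp Y k) Y n" using IH False by simp
      then show ?thesis using eqF by simp
    qed
  qed
qed

definition pY :: "(nat \<times> nat \<Rightarrow> real) \<Rightarrow> nat \<Rightarrow> nat" where
  "pY Y = (\<lambda>n. if n \<in> {2..K} then gp Y (K - 1) n else 0)"

lemma pY_fix: "\<forall>n\<in>{2..K}. pY Y n = Fx (pY Y) Y n"
proof
  fix n assume n: "n \<in> {2..K}"
  have "gp Y (K - 1) n = Fx (gp Y (K - 1)) Y n" using gp_fix[of "K - 1" Y] n K2 by auto
  moreover have "Fx (gp Y (K - 1)) Y n = Fx (pY Y) Y n"
    by (rule Fx_local[OF n]) (use n in \<open>auto simp: pY_def\<close>)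
  ultimately show "pY Y n = Fx (pY Y) Y n" using n by (simp add: pY_def)
qed

lemma am_sub: "am C N S \<subseteq> C" unfolding am_def by auto

lemma am_ne: assumes "finite C" "C \<noteq> {}" shows "am C N S \<noteq> {}"
proof -
  let ?f = "emp_mean N S"
  have "Min (?f ` C) \<in> ?f ` C" using assms by auto
  then obtain i where i: "i \<in> C" "?f i = Min (?f ` C)" by auto
  have "\<forall>j\<in>C. ?f i \<le> ?f j" using i assms by auto
  then show ?thesis using i unfolding am_def by auto
qed

lemma Fx_in: assumes "J p n \<noteq> {}" shows "Fx p Y n \<in> am (J p n) (dN p (E n)) (dS p Y (E n))"
  unfolding Fx_def using te_in am_ne[OF _ assms] by (auto simp: J_def)

lemma Fx_inJ: "J p n \<noteq> {} \<Longrightarrow> Fx p Y n \<in> J p n"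
  using Fx_in am_sub by blast

definition valid :: "(nat \<Rightarrow> nat) \<Rightarrow> bool" where
  "valid p \<longleftrightarrow> (\<forall>n\<in>{2..K}. card (J p n) = n \<and> p n \<in> J p n)"

lemma J_step: "n < K \<Longrightarrow> J p n = J p (Suc n) - {p (Suc n)}"
proof -
  assume "n < K"
  then have "{Suc n..K} = insert (Suc n) {Suc (Suc n)..K}" by auto
  then show ?thesis unfolding J_def by auto
qed

lemma fix_valid: assumes fx: "\<forall>n\<in>{2..K}. p n = Fx p Y n" shows "valid p"
proof -
  have "\<forall>k. k \<le> K - 2 \<longrightarrow> card (J p (K - k)) = K - k \<and> p (K - k) \<in> J p (K - k)"
  proof
    fix k show "k \<le> K - 2 \<longrightarrow> card (J p (K - k)) = K - k \<and> p (K - k) \<in> J p (K - k)"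
    proof (induction k)
      case 0
      have JK: "J p K = {..<K}" unfolding J_def by auto
      then have "0 \<in> J p K" using K2 by auto
      then have "J p K \<noteq> {}" by auto
      moreover have "p K = Fx p Y K" using fx K2 by auto
      ultimately have "p K \<in> J p K" using Fx_inJ by simp
      then show ?case using JK by simp
    next
      case (Suc k)
      show ?case
      proof
        assume k: "Suc k \<le> K - 2"
        then have IH: "card (J p (K - k)) = K - k \<and> p (K - k) \<in> J p (K - k)" using Suc by auto
        have eq: "J p (K - Suc k) = J p (K - k) - {p (K - k)}"
          using J_step[of "K - Suc k" p] k by (simp add: Suc_diff_Suc)
        have fin: "finite (J p (K - k))" unfolding J_def by auto
        have c: "card (J p (K - Suc k)) = K - Suc k" using IH eq fin by simp
        then have "J p (K - Suc k) \<noteq> {}" using k by auto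
        moreover have "p (K - Suc k) = Fx p Y (K - Suc k)" using fx k by auto
        ultimately have "p (K - Suc k) \<in> J p (K - Suc k)" using Fx_inJ by simp
        then show "card (J p (K - Suc k)) = K - Suc k \<and> p (K - Suc k) \<in> J p (K - Suc k)" using c by simp
      qed
    qed
  qed
  then show ?thesis unfolding valid_def
  proof (intro ballI)
    fix n assume h: "\<forall>k. k \<le> K - 2 \<longrightarrow> card (J p (K - k)) = K - k \<and> p (K - k) \<in> J p (K - k)"
      and n: "n \<in> {2..K}"
    have "K - n \<le> K - 2" "K - (K - n) = n" using n by auto
    then show "card (J p n) = n \<and> p n \<in> J p n" using h[rule_format, of "K - n"] by simp
  qed
qed

lemma dC_T: "dC p T = {..<K} - p ` {2..K}"
proof -
  have "{m\<in>{2..K}. E m \<le> T} = {2..K}" using E_le_T by auto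
  then show ?thesis unfolding dC_def by simp
qed

lemma valid_final: assumes "valid p" shows "\<exists>x. dC p T = {x}"
proof -
  have "{2..K} = insert 2 {Suc 2..K}" using K2 by auto
  then have "dC p T = J p 2 - {p 2}" unfolding dC_T J_def by auto
  moreover have "card (J p 2) = 2" "p 2 \<in> J p 2" using assms K2 unfolding valid_def by auto
  moreover have "finite (J p 2)" unfolding J_def by auto
  ultimately have "card (dC p T) = 1" by simp
  then show ?thesis by (simp add: card_1_singleton_iff)
qed

lemma valid_out: "valid p \<Longrightarrow> the_elem (dC p T) \<in> dC p T"
  using valid_final by force

end

context bae_ctx begin

declare dN.simps(2)[simp del]

lemma dC_ne: "dC p u \<noteq> {}"
proof
  assume h: "dC p u = {}"
  have "{..<K} \<subseteq> p ` {2..K}" using h unfolding dC_def by auto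
  then have "card {..<K} \<le> card (p ` {2..K})" by (intro card_mono) auto
  also have "\<dots> \<le> card {2..K}" by (rule card_image_le) auto
  finally show False using K2 by simp
qed

lemma dC_fin: "finite (dC p u)" unfolding dC_def by auto

lemma msel_ne: assumes "finite C" "C \<noteq> {}" shows "msel C N \<noteq> {}"
proof -
  have "Min (N ` C) \<in> N ` C" using assms by auto
  then obtain i where i: "i \<in> C" "N i = Min (N ` C)" by auto
  have "\<forall>j\<in>C. N i \<le> N j" using i assms by auto
  then show ?thesis using i unfolding msel_def by auto
qed

lemma da_msel: "da p u \<in> msel (dC p u) (dN p u)"
proof -
  have ne: "msel (dC p u) (dN p u) \<noteq> {}" by (rule msel_ne[OF dC_fin dC_ne])
  show ?thesis unfolding da_def using ta_in[rule_format, OF ne] .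
qed

lemma da_in: "da p u \<in> dC p u" using da_msel unfolding msel_def by auto

lemma da_min: "j \<in> dC p u \<Longrightarrow> dN p u (da p u) \<le> dN p u j"
  using da_msel unfolding msel_def by auto

lemma dC_anti: "u \<le> v \<Longrightarrow> dC p v \<subseteq> dC p u"
  unfolding dC_def by auto

lemma dN_card: "dN p t i = card {s. s < t \<and> da p s = i}"
proof (induction t)
  case 0
  then show ?case by simp
next
  case (Suc t)
  show ?case
  proof (cases "i = da p t")
    case True
    have "{s. s < Suc t \<and> da p s = i} = insert t {s. s < t \<and> da p s = i}" using True by auto
    then show ?thesis using Suc True by (simp add: dN_Suc)
  next
    case False
    have "{s. s < Suc t \<and> da p s = i} = {s. s < t \<and> da p s = i}" using False less_Suc_eq by auto
    then show ?thesis using Suc False by (simp add: dN_Suc)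
  qed
qed

lemma inv_both: "(\<forall>i\<in>dC p u. \<forall>j\<in>dC p u. dN p u i \<le> dN p u j + 1) \<and>
   (\<forall>i\<in>dC p u. \<forall>j\<in>dC p u. dN p (Suc u) i \<le> dN p (Suc u) j + 1)"
proof (induction u)
  case 0
  have A: "\<forall>i\<in>dC p 0. \<forall>j\<in>dC p 0. dN p 0 i \<le> dN p 0 j + 1" by simp
  show ?case
  proof (intro conjI A ballI)
    fix i j assume ij: "i \<in> dC p 0" "j \<in> dC p 0"
    show "dN p (Suc 0) i \<le> dN p (Suc 0) j + 1" by (simp add: dN_Suc)
  qed
next
  case (Suc u)
  have A: "\<forall>i\<in>dC p (Suc u). \<forall>j\<in>dC p (Suc u). dN p (Suc u) i \<le> dN p (Suc u) j + 1"
  proof (intro ballI)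
    fix i j assume "i \<in> dC p (Suc u)" "j \<in> dC p (Suc u)"
    then have "i \<in> dC p u" "j \<in> dC p u" using dC_anti[of u "Suc u" p] by auto
    then show "dN p (Suc u) i \<le> dN p (Suc u) j + 1" using conjunct2[OF Suc.IH] by blast
  qed
  show ?case
  proof (intro conjI A ballI)
    fix i j assume ij: "i \<in> dC p (Suc u)" "j \<in> dC p (Suc u)"
    have m: "dN p (Suc u) (da p (Suc u)) \<le> dN p (Suc u) j" using da_min ij by auto
    have m2: "dN p (Suc u) i \<le> dN p (Suc u) (da p (Suc u)) + 1"
      using A ij da_in[of p "Suc u"] by auto
    have m3: "dN p (Suc u) i \<le> dN p (Suc u) j + 1" using A ij by auto
    show "dN p (Suc (Suc u)) i \<le> dN p (Suc (Suc u)) j + 1"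
      using m m3 by (cases "i = da p (Suc u)") (auto simp: dN_Suc[of p "Suc u"])
  qed
qed

lemma phase_sum:
  assumes "a \<le> b" "\<forall>u. a \<le> u \<and> u < b \<longrightarrow> dC p u = C"
  shows "(\<Sum>i\<in>C. dN p b i) = (\<Sum>i\<in>C. dN p a i) + (b - a)"
  using assms
proof (induction b rule: dec_induct)
  case base
  then show ?case by simp
next
  case (step n)
  have C: "dC p n = C" using step by auto
  have fin: "finite C" using C dC_fin by auto
  have inC: "da p n \<in> C" using da_in C by auto
  have "(\<Sum>i\<in>C. dN p (Suc n) i) = (\<Sum>i\<in>C. dN p n i) + (\<Sum>i\<in>C. (if i = da p n then 1 else 0))"
    unfolding dN_Suc by (simp add: sum.distrib)
  also have "(\<Sum>i\<in>C. (if i = da p n then 1 else 0)) = (1::nat)" using fin inC by simp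
  finally show ?case using step by simp
qed

lemma phase:
  assumes ab: "a \<le> b" and C: "\<forall>u. a \<le> u \<and> u < b \<longrightarrow> dC p u = C"
    and L: "\<forall>i\<in>C. L \<le> real (dN p a i)" and i: "i \<in> C" and m: "card C = m"
  shows "L + (real b - real a) / real m - 1 \<le> real (dN p b i)"
proof (cases "a = b")
  case True
  then show ?thesis using L i by fastforce
next
  case False
  then have ab': "a < b" using ab by auto
  have Cb: "dC p (b - 1) = C" using C ab' by auto
  have fin: "finite C" using Cb dC_fin by auto
  have "card C > 0" using Cb dC_ne[of p "b-1"] fin card_gt_0_iff by blast
  then have m0: "m > 0" using m by simp
  have hb: "Suc (b - 1) = b" using ab' by simp
  have all: "\<forall>i\<in>C. \<forall>j\<in>C. dN p b i \<le> dN p b j + 1"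
    using conjunct2[OF inv_both[of p "b-1"]] unfolding Cb hb .
  have "(\<Sum>j\<in>C. real (dN p b j)) \<le> (\<Sum>j\<in>C. real (dN p b i) + 1)"
  proof (intro sum_mono)
    fix j assume "j \<in> C"
    then have "dN p b j \<le> dN p b i + 1" using all i by blast
    then have "real (dN p b j) \<le> real (dN p b i + 1)" by (simp only: of_nat_le_iff)
    then show "real (dN p b j) \<le> real (dN p b i) + 1" by simp
  qed
  also have "\<dots> = real m * (real (dN p b i) + 1)" unfolding sum_constant m ..
  finally have up: "(\<Sum>j\<in>C. real (dN p b j)) \<le> real m * (real (dN p b i) + 1)" .
  have "(\<Sum>j\<in>C. dN p b j) = (\<Sum>j\<in>C. dN p a j) + (b - a)" by (rule phase_sum[OF ab C])
  then have "real (\<Sum>j\<in>C. dN p b j) = real ((\<Sum>j\<in>C. dN p a j) + (b - a))" by (simp only:)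
  then have "(\<Sum>j\<in>C. real (dN p b j)) = (\<Sum>j\<in>C. real (dN p a j)) + (real b - real a)"
    using ab by (simp add: of_nat_diff)
  moreover have "(\<Sum>j\<in>C. real (dN p a j)) \<ge> (\<Sum>j\<in>C. L)" using L by (intro sum_mono) auto
  moreover have "(\<Sum>j\<in>C. L) = real m * L" unfolding sum_constant m ..
  ultimately have ineq: "real m * L + (real b - real a) \<le> real m * (real (dN p b i) + 1)"
    using up by linarith
  have mp: "real m > 0" using m0 by simp
  have "(real m * L + (real b - real a)) / real m \<le> (real m * (real (dN p b i) + 1)) / real m"
    using divide_right_mono[OF ineq, of "real m"] mp by simp
  moreover have "(real m * L + (real b - real a)) / real m = L + (real b - real a) / real m"
    using mp by (simp add: add_divide_distrib)
  moreover have "(real m * (real (dN p b i) + 1)) / real m = real (dN p b i) + 1"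
    using mp by simp
  ultimately show ?thesis by linarith
qed

lemma sum_split: "m \<le> K \<Longrightarrow> (\<Sum>k\<in>{m..K}. f k) = f m + (\<Sum>k\<in>{Suc m..K}. f k)"
  by (simp add: sum.atLeast_Suc_atMost)

lemma E_diff: assumes m: "m \<in> {2..K}"
  shows "real (E m) - real (E (Suc m)) \<ge> \<beta> m * real T - 1"
proof -
  let ?s = "\<lambda>m. (\<Sum>k\<in>{m..K}. \<beta> k)"
  have nn: "?s m' \<ge> 0" if "m' \<ge> 2" for m' using bnn that by (intro sum_nonneg) auto
  have r: "real (E m') = real_of_int \<lfloor>?s m' * real T\<rfloor>" if "m' \<ge> 2" for m'
    unfolding elim_time_def using nn[OF that] by simp
  have sm: "?s m * real T = \<beta> m * real T + ?s (Suc m) * real T" using m sum_split[of m \<beta>] by (auto simp: algebra_simps)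
  define x where "x = ?s (Suc m) * real T"
  define y where "y = \<beta> m * real T"
  have e1: "real (E m) = real_of_int \<lfloor>y + x\<rfloor>" using r[of m] m sm unfolding x_def y_def by auto
  have e2: "real (E (Suc m)) = real_of_int \<lfloor>x\<rfloor>" using r[of "Suc m"] m unfolding x_def by auto
  have f1: "real_of_int \<lfloor>y + x\<rfloor> > y + x - 1" by linarith
  have f2: "real_of_int \<lfloor>x\<rfloor> \<le> x" by linarith
  show ?thesis using e1 e2 f1 f2 unfolding y_def by linarith
qed

lemma wgt_split: "m \<le> K \<Longrightarrow> wgt K \<beta> m = \<beta> m / real m + wgt K \<beta> (Suc m)"
  unfolding wgt_def by (rule sum_split)

lemma dC_phase: assumes m: "m \<in> {2..K}" and u: "E (Suc m) \<le> u" "u < E m"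
  shows "dC p u = J p m"
proof -
  have "{m'\<in>{2..K}. E m' \<le> u} = {Suc m..K}"
  proof
    show "{m'\<in>{2..K}. E m' \<le> u} \<subseteq> {Suc m..K}"
    proof
      fix m' assume h: "m' \<in> {m'\<in>{2..K}. E m' \<le> u}"
      have "\<not> m' \<le> m"
      proof
        assume "m' \<le> m" then have "E m \<le> E m'" using E_mono[of m' m] m h by auto
        then show False using h u by auto
      qed
      then show "m' \<in> {Suc m..K}" using h by auto
    qed
    show "{Suc m..K} \<subseteq> {m'\<in>{2..K}. E m' \<le> u}"
    proof
      fix m' assume h: "m' \<in> {Suc m..K}"
      then have "E m' \<le> E (Suc m)" using E_mono[of "Suc m" m'] m by auto
      then show "m' \<in> {m'\<in>{2..K}. E m' \<le> u}" using h u m by auto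
    qed
  qed
  then show ?thesis unfolding dC_def J_def by simp
qed

lemma E_SucK: "E (Suc K) = 0" unfolding elim_time_def by simp

lemma E_Suc_le: assumes "m \<in> {2..K}" shows "E (Suc m) \<le> E m"
proof (cases "m = K")
  case True then show ?thesis using E_SucK by simp
next
  case False then show ?thesis using E_mono[of m "Suc m"] assms by auto
qed

lemma count_bound:
  assumes v: "valid p" and m: "m \<in> {2..K}"
  shows "\<forall>j\<in>J p m. real T * wgt K \<beta> m - 2 * (real K + 1 - real m) \<le> real (dN p (E m) j)"
proof -
  have "\<forall>k. k \<le> K - 1 \<longrightarrow> (\<forall>j\<in>J p (Suc K - k). real T * wgt K \<beta> (Suc K - k) - 2 * (real K + 1 - real (Suc K - k)) \<le> real (dN p (E (Suc K - k)) j))"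
  proof
    fix k show "k \<le> K - 1 \<longrightarrow> (\<forall>j\<in>J p (Suc K - k). real T * wgt K \<beta> (Suc K - k) - 2 * (real K + 1 - real (Suc K - k)) \<le> real (dN p (E (Suc K - k)) j))"
    proof (induction k)
      case 0
      have "wgt K \<beta> (Suc K) = 0" unfolding wgt_def by simp
      then show ?case using E_SucK by simp
    next
      case (Suc k)
      show ?case
      proof
        assume k: "Suc k \<le> K - 1"
        define mm where "mm = Suc K - Suc k"
        have mm: "mm \<in> {2..K}" using k K2 unfolding mm_def by auto
        have smm: "Suc mm = Suc K - k" using k unfolding mm_def by auto
        have IH: "\<forall>j\<in>J p (Suc mm). real T * wgt K \<beta> (Suc mm) - 2 * (real K + 1 - real (Suc mm)) \<le> real (dN p (E (Suc mm)) j)"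
          using Suc k smm by auto
        have sub: "J p mm \<subseteq> J p (Suc mm)" unfolding J_def by auto
        have cm: "card (J p mm) = mm" using v mm unfolding valid_def by auto
        have "\<forall>j\<in>J p mm. real T * wgt K \<beta> mm - 2 * (real K + 1 - real mm) \<le> real (dN p (E mm) j)"
        proof
          fix j assume j: "j \<in> J p mm"
          have ph: "(real T * wgt K \<beta> (Suc mm) - 2 * (real K + 1 - real (Suc mm)))
              + (real (E mm) - real (E (Suc mm))) / real mm - 1 \<le> real (dN p (E mm) j)"
            by (rule phase[OF E_Suc_le[OF mm] _ _ j cm]) (use dC_phase[OF mm] IH sub in auto)
          have d: "(real (E mm) - real (E (Suc mm))) / real mm \<ge> (\<beta> mm * real T - 1) / real mm"
            using E_diff[OF mm] mm by (intro divide_right_mono) auto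
          have "1 / real mm \<le> 1" using mm by auto
          then have f1: "(\<beta> mm * real T - 1) / real mm \<ge> \<beta> mm * real T / real mm - 1"
            by (simp add: diff_divide_distrib)
          define A where "A = \<beta> mm * real T / real mm"
          define Dd where "Dd = (real (E mm) - real (E (Suc mm))) / real mm"
          define W1 where "W1 = real T * wgt K \<beta> (Suc mm)"
          define W where "W = real T * wgt K \<beta> mm"
          have a1: "A - 1 \<le> Dd" unfolding A_def Dd_def using f1 d by (rule order_trans)
          have "wgt K \<beta> mm = \<beta> mm / real mm + wgt K \<beta> (Suc mm)" using mm wgt_split by auto
          then have a2: "W = A + W1" unfolding W_def A_def W1_def
            by (simp add: distrib_left)
          have a3: "W1 - 2 * (real K + 1 - real (Suc mm)) + Dd - 1 \<le> real (dN p (E mm) j)"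
            using ph unfolding W1_def Dd_def .
          have "real (Suc mm) = real mm + 1" by simp
          then have "W - 2 * (real K + 1 - real mm) \<le> real (dN p (E mm) j)"
            using a1 a2 a3 by (smt (verit))
          then show "real T * wgt K \<beta> mm - 2 * (real K + 1 - real mm) \<le> real (dN p (E mm) j)"
            unfolding W_def .
        qed
        then show "\<forall>j\<in>J p (Suc K - Suc k). real T * wgt K \<beta> (Suc K - Suc k) - 2 * (real K + 1 - real (Suc K - Suc k)) \<le> real (dN p (E (Suc K - Suc k)) j)"
          unfolding mm_def .
      qed
    qed
  qed
  then have h: "Suc K - m \<le> K - 1 \<longrightarrow> (\<forall>j\<in>J p (Suc K - (Suc K - m)). real T * wgt K \<beta> (Suc K - (Suc K - m)) - 2 * (real K + 1 - real (Suc K - (Suc K - m))) \<le> real (dN p (E (Suc K - (Suc K - m))) j))"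
    by blast
  moreover have "Suc K - (Suc K - m) = m" "Suc K - m \<le> K - 1" using m by auto
  ultimately show ?thesis by simp
qed

end

lemma normal_shift:
  assumes s: "\<sigma> > 0"
  shows "normal_density \<mu> \<sigma> y * exp (a * y) = exp (a * \<mu> + a\<^sup>2 * \<sigma>\<^sup>2 / 2) * normal_density (\<mu> + a * \<sigma>\<^sup>2) \<sigma> y"
proof -
  have "-(y - \<mu>)\<^sup>2 / (2 * \<sigma>\<^sup>2) + a * y = (a * \<mu> + a\<^sup>2 * \<sigma>\<^sup>2 / 2) + (-(y - (\<mu> + a * \<sigma>\<^sup>2))\<^sup>2 / (2 * \<sigma>\<^sup>2))"
    using s by (simp add: field_simps power2_eq_square)
  then have "exp (-(y - \<mu>)\<^sup>2 / (2 * \<sigma>\<^sup>2)) * exp (a * y) = exp (a * \<mu> + a\<^sup>2 * \<sigma>\<^sup>2 / 2) * exp (-(y - (\<mu> + a * \<sigma>\<^sup>2))\<^sup>2 / (2 * \<sigma>\<^sup>2))"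
    by (simp add: exp_add[symmetric])
  then show ?thesis unfolding normal_density_def by (simp add: algebra_simps)
qed

lemma normal_mgf:
  assumes s: "\<sigma> > 0"
  shows "integrable (density lborel (normal_density \<mu> \<sigma>)) (\<lambda>y. exp (a * y))"
    and "(\<integral>y. exp (a * y) \<partial>density lborel (normal_density \<mu> \<sigma>)) = exp (a * \<mu> + a\<^sup>2 * \<sigma>\<^sup>2 / 2)"
proof -
  have eq: "(\<lambda>y. normal_density \<mu> \<sigma> y *\<^sub>R exp (a * y)) = (\<lambda>y. exp (a * \<mu> + a\<^sup>2 * \<sigma>\<^sup>2 / 2) * normal_density (\<mu> + a * \<sigma>\<^sup>2) \<sigma> y)"
    using normal_shift[OF s] by auto
  have eq2: "(\<lambda>y. normal_density \<mu> \<sigma> y * exp (a * y)) = (\<lambda>y. exp (a * \<mu> + a\<^sup>2 * \<sigma>\<^sup>2 / 2) * normal_density (\<mu> + a * \<sigma>\<^sup>2) \<sigma> y)"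
    using normal_shift[OF s] by auto
  show "integrable (density lborel (normal_density \<mu> \<sigma>)) (\<lambda>y. exp (a * y))"
    using s by (subst integrable_density) (auto simp: eq2 intro!: integrable_mult_right integrable_normal_density)
  have "(\<integral>y. exp (a * y) \<partial>density lborel (normal_density \<mu> \<sigma>)) = (\<integral>y. normal_density \<mu> \<sigma> y *\<^sub>R exp (a * y) \<partial>lborel)"
    by (subst integral_density) auto
  also have "\<dots> = exp (a * \<mu> + a\<^sup>2 * \<sigma>\<^sup>2 / 2)" unfolding eq using integral_normal_density[OF s] by simp
  finally show "(\<integral>y. exp (a * y) \<partial>density lborel (normal_density \<mu> \<sigma>)) = exp (a * \<mu> + a\<^sup>2 * \<sigma>\<^sup>2 / 2)" .
qed

definition Mi :: "real \<Rightarrow> (nat \<Rightarrow> real) \<Rightarrow> nat \<times> nat \<Rightarrow> real measure" where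
  "Mi \<sigma> \<theta> x = density lborel (normal_density (\<theta> (snd x)) \<sigma>)"

lemma outcome_eq: "outcome_measure K \<sigma> \<theta> T = PiM ({..<T} \<times> {..<K}) (Mi \<sigma> \<theta>)"
proof -
  have "(\<lambda>(t, i). density lborel (normal_density (\<theta> i) \<sigma>)) = Mi \<sigma> \<theta>"
    by (rule ext) (auto simp: Mi_def split: prod.splits)
  then show ?thesis unfolding outcome_measure_def by simp
qed

lemma prob_Mi: "\<sigma> > 0 \<Longrightarrow> prob_space (Mi \<sigma> \<theta> x)"
  unfolding Mi_def by (rule prob_space_normal_density)

lemma psf: "\<sigma> > 0 \<Longrightarrow> product_sigma_finite (Mi \<sigma> \<theta>)"
  unfolding product_sigma_finite_def using prob_Mi prob_space_imp_sigma_finite by blast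

lemma prob_outcome: "\<sigma> > 0 \<Longrightarrow> prob_space (outcome_measure K \<sigma> \<theta> T)"
  unfolding outcome_eq by (rule prob_space_PiM) (rule prob_Mi)

lemma sets_Mi: "sets (Mi \<sigma> \<theta> x) = sets borel"
  unfolding Mi_def by simp

lemma coord_meas:
  assumes "x \<in> {..<T} \<times> {..<K}"
  shows "(\<lambda>Y. Y x) \<in> borel_measurable (outcome_measure K \<sigma> \<theta> T)"
proof -
  have "(\<lambda>Y. Y x) \<in> measurable (PiM ({..<T} \<times> {..<K}) (Mi \<sigma> \<theta>)) (Mi \<sigma> \<theta> x)"
    using assms by (rule measurable_component_singleton)
  then show ?thesis unfolding outcome_eq using measurable_cong_sets[OF refl sets_Mi] by blast
qed

lemma prod_mgf:
  assumes s: "\<sigma> > 0"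
  shows "integrable (outcome_measure K \<sigma> \<theta> T) (\<lambda>Y. exp (\<Sum>x\<in>{..<T} \<times> {..<K}. \<alpha> x * Y x))"
    and "(\<integral>Y. exp (\<Sum>x\<in>{..<T} \<times> {..<K}. \<alpha> x * Y x) \<partial>outcome_measure K \<sigma> \<theta> T)
       = exp (\<Sum>x\<in>{..<T} \<times> {..<K}. \<alpha> x * \<theta> (snd x) + (\<alpha> x)\<^sup>2 * \<sigma>\<^sup>2 / 2)"
proof -
  let ?I = "{..<T} \<times> {..<K}"
  have fin: "finite ?I" by auto
  have e: "(\<lambda>Y. exp (\<Sum>x\<in>?I. \<alpha> x * Y x)) = (\<lambda>Y. \<Prod>x\<in>?I. exp (\<alpha> x * Y x))"
    using fin by (simp add: exp_sum)
  have int: "integrable (Mi \<sigma> \<theta> x) (\<lambda>y. exp (\<alpha> x * y))" for x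
    unfolding Mi_def by (rule normal_mgf(1)[OF s])
  show "integrable (outcome_measure K \<sigma> \<theta> T) (\<lambda>Y. exp (\<Sum>x\<in>?I. \<alpha> x * Y x))"
    unfolding outcome_eq e by (rule product_sigma_finite.product_integrable_prod[OF psf[OF s] fin int])
  have "(\<integral>Y. exp (\<Sum>x\<in>?I. \<alpha> x * Y x) \<partial>outcome_measure K \<sigma> \<theta> T)
      = (\<Prod>x\<in>?I. (\<integral>y. exp (\<alpha> x * y) \<partial>Mi \<sigma> \<theta> x))"
    unfolding outcome_eq e by (rule product_sigma_finite.product_integral_prod[OF psf[OF s] fin int])
  also have "\<dots> = (\<Prod>x\<in>?I. exp (\<alpha> x * \<theta> (snd x) + (\<alpha> x)\<^sup>2 * \<sigma>\<^sup>2 / 2))"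
    unfolding Mi_def using normal_mgf(2)[OF s] by simp
  also have "\<dots> = exp (\<Sum>x\<in>?I. \<alpha> x * \<theta> (snd x) + (\<alpha> x)\<^sup>2 * \<sigma>\<^sup>2 / 2)"
    using fin by (simp add: exp_sum)
  finally show "(\<integral>Y. exp (\<Sum>x\<in>?I. \<alpha> x * Y x) \<partial>outcome_measure K \<sigma> \<theta> T)
       = exp (\<Sum>x\<in>?I. \<alpha> x * \<theta> (snd x) + (\<alpha> x)\<^sup>2 * \<sigma>\<^sup>2 / 2)" .
qed

lemma sumI:
  fixes g :: "nat \<Rightarrow> nat \<Rightarrow> real"
  assumes A: "\<forall>i\<in>J. A i \<subseteq> {..<T}" and J: "J \<subseteq> {..<K}"
  shows "(\<Sum>x\<in>{..<T} \<times> {..<K}. (if snd x \<in> J \<and> fst x \<in> A (snd x) then g (snd x) (fst x) else 0))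
       = (\<Sum>i\<in>J. \<Sum>s\<in>A i. g i s)"
proof -
  have "(\<Sum>x\<in>{..<T} \<times> {..<K}. (if snd x \<in> J \<and> fst x \<in> A (snd x) then g (snd x) (fst x) else 0))
      = (\<Sum>(s, i)\<in>{..<T} \<times> {..<K}. (if i \<in> J \<and> s \<in> A i then g i s else 0))"
    by (intro sum.cong) (auto split: prod.splits)
  also have "\<dots> = (\<Sum>s<T. \<Sum>i<K. (if i \<in> J \<and> s \<in> A i then g i s else 0))"
    by (simp add: sum.cartesian_product)
  also have "\<dots> = (\<Sum>i<K. \<Sum>s<T. (if i \<in> J \<and> s \<in> A i then g i s else 0))"
    by (rule sum.swap)
  also have "\<dots> = (\<Sum>i<K. if i \<in> J then (\<Sum>s\<in>A i. g i s) else 0)"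
  proof (rule sum.cong[OF refl])
    fix i assume "i \<in> {..<K}"
    show "(\<Sum>s<T. (if i \<in> J \<and> s \<in> A i then g i s else 0)) = (if i \<in> J then (\<Sum>s\<in>A i. g i s) else 0)"
    proof (cases "i \<in> J")
      case True
      have "(\<Sum>s<T. (if s \<in> A i then g i s else 0)) = (\<Sum>s\<in>{..<T} \<inter> A i. g i s)"
        by (rule sum.inter_restrict[symmetric]) auto
      also have "{..<T} \<inter> A i = A i" using A True by auto
      finally show ?thesis using True by simp
    qed simp
  qed
  also have "\<dots> = (\<Sum>i\<in>{..<K} \<inter> J. \<Sum>s\<in>A i. g i s)"
    by (rule sum.inter_restrict[symmetric]) auto
  also have "{..<K} \<inter> J = J" using J by auto
  finally show ?thesis .
qed

lemma emp_meas:
  assumes i: "i < K" and A: "A \<subseteq> {..<T}" and that: "A' i = A"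
  shows "(\<lambda>Y. emp_mean N (\<lambda>i. \<Sum>s\<in>A' i. Y (s, i)) i) \<in> borel_measurable (outcome_measure K \<sigma> \<theta> T)"
proof -
  have "(\<lambda>Y. \<Sum>s\<in>A. Y (s, i)) \<in> borel_measurable (outcome_measure K \<sigma> \<theta> T)"
  proof (rule borel_measurable_sum)
    fix s assume "s \<in> A"
    then show "(\<lambda>Y. Y (s, i)) \<in> borel_measurable (outcome_measure K \<sigma> \<theta> T)"
      using i A by (intro coord_meas) auto
  qed
  then show ?thesis unfolding emp_mean_def using that by auto
qed

lemma term_bound:
  fixes N \<nu> \<sigma> x t :: real
  assumes "\<nu> > 0" "\<nu> \<le> N" "\<sigma> > 0"
  shows "N * ((\<nu> / \<sigma>\<^sup>2 * x / N) * t + (\<nu> / \<sigma>\<^sup>2 * x / N)\<^sup>2 * \<sigma>\<^sup>2 / 2)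
     \<le> \<nu> / \<sigma>\<^sup>2 * x * t + \<nu> * x\<^sup>2 / (2 * \<sigma>\<^sup>2)"
proof -
  have N0: "N > 0" using assms by auto
  have e: "N * ((\<nu> / \<sigma>\<^sup>2 * x / N) * t + (\<nu> / \<sigma>\<^sup>2 * x / N)\<^sup>2 * \<sigma>\<^sup>2 / 2)
      = \<nu> / \<sigma>\<^sup>2 * x * t + (\<nu> / N) * (\<nu> * x\<^sup>2 / (2 * \<sigma>\<^sup>2))"
    using N0 assms(3) by (simp add: field_simps power2_eq_square)
  have "(\<nu> / N) * (\<nu> * x\<^sup>2 / (2 * \<sigma>\<^sup>2)) \<le> \<nu> * x\<^sup>2 / (2 * \<sigma>\<^sup>2)"
    using assms N0 by (intro mult_left_le_one_le) auto
  then show ?thesis using e by linarith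
qed

lemma fixpoint_exists:
  fixes \<theta> :: "nat \<Rightarrow> real"
  assumes "finite J'"
  shows "\<exists>c. c + (\<Sum>i\<in>J'. max (c - \<theta> i) 0) = tb"
proof -
  define D where "D = (\<Sum>i\<in>J'. \<bar>tb - \<theta> i\<bar>)"
  define f where "f = (\<lambda>c. c + (\<Sum>i\<in>J'. max (c - \<theta> i) 0))"
  have D0: "D \<ge> 0" unfolding D_def by (intro sum_nonneg) auto
  have le: "\<bar>tb - \<theta> i\<bar> \<le> D" if "i \<in> J'" for i
    unfolding D_def using assms that by (intro member_le_sum) auto
  have "f (tb - D) = tb - D"
  proof -
    have "\<forall>i\<in>J'. max (tb - D - \<theta> i) 0 = 0" using le by force
    then show ?thesis unfolding f_def by simp
  qed
  then have a: "f (tb - D) \<le> tb" using D0 by simp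
  have b: "tb \<le> f tb" unfolding f_def by (simp add: sum_nonneg)
  have cont: "continuous_on {tb - D..tb} f" unfolding f_def by (intro continuous_intros)
  obtain c where "f c = tb" using IVT'[of f "tb - D" tb tb, OF a b _ cont] D0 by auto
  then show ?thesis unfolding f_def by auto
qed

lemma chernoff:
  fixes \<sigma> c \<nu> :: real and \<theta> :: "nat \<Rightarrow> real" and J :: "nat set" and A :: "nat \<Rightarrow> nat set"
    and N :: "nat \<Rightarrow> nat" and b :: nat
  assumes s: "\<sigma> > 0" and J: "J \<subseteq> {..<K}" and bJ: "b \<in> J"
    and A: "\<forall>i\<in>J. A i \<subseteq> {..<T}" and N: "\<forall>i\<in>J. N i = card (A i)"
    and nu: "\<nu> > 0" and Nnu: "\<forall>i\<in>J. \<nu> \<le> real (N i)"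
    and fp: "c + (\<Sum>i\<in>J - {b}. max (c - \<theta> i) 0) = \<theta> b"
  shows "measure (outcome_measure K \<sigma> \<theta> T)
      {Y \<in> space (outcome_measure K \<sigma> \<theta> T). \<forall>j\<in>J. emp_mean N (\<lambda>i. \<Sum>s\<in>A i. Y (s, i)) b \<le> emp_mean N (\<lambda>i. \<Sum>s\<in>A i. Y (s, i)) j}
     \<le> exp (- \<nu> / (2 * \<sigma>\<^sup>2) * ((\<theta> b - c)\<^sup>2 + (\<Sum>i\<in>J - {b}. (max (c - \<theta> i) 0)\<^sup>2)))"
proof -
  let ?M = "outcome_measure K \<sigma> \<theta> T"
  let ?I = "{..<T} \<times> {..<K}"
  define S :: "(nat \<times> nat \<Rightarrow> real) \<Rightarrow> nat \<Rightarrow> real" where "S = (\<lambda>Y i. \<Sum>s\<in>A i. Y (s, i))"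
  define B where "B = {Y \<in> space ?M. \<forall>j\<in>J. emp_mean N (S Y) b \<le> emp_mean N (S Y) j}"
  define J' where "J' = J - {b}"
  define bt where "bt = (\<lambda>i. max (c - \<theta> i) 0)"
  define Bt where "Bt = (\<Sum>i\<in>J'. bt i)"
  define k where "k = \<nu> / \<sigma>\<^sup>2"
  define xx where "xx = (\<lambda>i. if i = b then - Bt else bt i)"
  define coef where "coef = (\<lambda>i. k * xx i / real (N i))"
  define \<alpha> where "\<alpha> = (\<lambda>x. if snd x \<in> J \<and> fst x \<in> A (snd x) then coef (snd x) else 0)"
  interpret prob_space ?M by (rule prob_outcome[OF s])
  have finJ: "finite J" using J finite_subset by blast
  have k0: "k > 0" unfolding k_def using s nu by auto
  have Npos: "real (N i) > 0" if "i \<in> J" for i using Nnu nu that by force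
  have bt0: "bt i \<ge> 0" for i unfolding bt_def by simp
  have Btc: "Bt = \<theta> b - c" using fp unfolding Bt_def bt_def J'_def by simp
  have Z: "(\<Sum>x\<in>?I. \<alpha> x * Y x) = (\<Sum>i\<in>J. coef i * S Y i)" for Y
  proof -
    have "(\<Sum>x\<in>?I. \<alpha> x * Y x) = (\<Sum>x\<in>?I. (if snd x \<in> J \<and> fst x \<in> A (snd x) then coef (snd x) * Y (fst x, snd x) else 0))"
      unfolding \<alpha>_def by (intro sum.cong) auto
    also have "\<dots> = (\<Sum>i\<in>J. \<Sum>s\<in>A i. coef i * Y (s, i))"
      by (rule sumI[OF A J])
    finally show ?thesis unfolding S_def by (simp add: sum_distrib_left)
  qed
  have Zs: "(\<Sum>i\<in>J. coef i * S Y i) = (\<Sum>i\<in>J'. k * bt i * (S Y i / real (N i) - S Y b / real (N b)))" for Y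
  proof -
    have "(\<Sum>i\<in>J. coef i * S Y i) = coef b * S Y b + (\<Sum>i\<in>J'. coef i * S Y i)"
      unfolding J'_def using finJ bJ by (simp add: sum.remove)
    also have "coef b * S Y b = - (\<Sum>i\<in>J'. k * bt i * (S Y b / real (N b)))"
    proof -
      have "(\<Sum>i\<in>J'. k * bt i * (S Y b / real (N b))) = (\<Sum>i\<in>J'. bt i * (k * (S Y b / real (N b))))"
        by (rule sum.cong[OF refl]) (simp only: mult.assoc mult.left_commute)
      also have "\<dots> = (\<Sum>i\<in>J'. bt i) * (k * (S Y b / real (N b)))"
        by (rule sum_distrib_right[symmetric])
      finally have "(\<Sum>i\<in>J'. k * bt i * (S Y b / real (N b))) = (\<Sum>i\<in>J'. bt i) * (k * (S Y b / real (N b)))" .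
      then show ?thesis unfolding coef_def xx_def Bt_def by simp
    qed
    also have "(\<Sum>i\<in>J'. coef i * S Y i) = (\<Sum>i\<in>J'. k * bt i * (S Y i / real (N i)))"
      unfolding coef_def xx_def J'_def by (intro sum.cong) auto
    finally show ?thesis by (simp add: sum_subtractf right_diff_distrib)
  qed
  have ind: "indicator B Y \<le> exp (\<Sum>x\<in>?I. \<alpha> x * Y x)" for Y
  proof (cases "Y \<in> B")
    case True
    have "\<forall>j\<in>J. emp_mean N (S Y) b \<le> emp_mean N (S Y) j" using True unfolding B_def by auto
    then have "\<forall>i\<in>J'. S Y b / real (N b) \<le> S Y i / real (N i)"
    proof (intro ballI)
      fix i assume i: "i \<in> J'" and h: "\<forall>j\<in>J. emp_mean N (S Y) b \<le> emp_mean N (S Y) j"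
      then have iJ: "i \<in> J" unfolding J'_def by auto
      have "N i \<noteq> 0" "N b \<noteq> 0" using Npos[OF iJ] Npos[OF bJ] by auto
      then show "S Y b / real (N b) \<le> S Y i / real (N i)" using h iJ unfolding emp_mean_def by auto
    qed
    then have "0 \<le> (\<Sum>i\<in>J'. k * bt i * (S Y i / real (N i) - S Y b / real (N b)))"
      using k0 bt0 by (intro sum_nonneg mult_nonneg_nonneg) auto
    then have "1 \<le> exp (\<Sum>x\<in>?I. \<alpha> x * Y x)" using Z Zs by simp
    then show ?thesis using True by simp
  next
    case False
    then show ?thesis by simp
  qed
  have Bmeas: "B \<in> sets ?M"
  proof -
    have m: "(\<lambda>Y. emp_mean N (S Y) i) \<in> borel_measurable ?M" if "i \<in> J" for i
      unfolding S_def using J A that by (intro emp_meas[where A = "A i"]) auto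
    show ?thesis unfolding B_def
      by (rule sets.sets_Collect_finite_All[OF _ finJ]) (use m bJ in \<open>auto intro: borel_measurable_le\<close>)
  qed
  have "measure ?M B = (\<integral>Y. indicator B Y \<partial>?M)" using Bmeas by simp
  also have "\<dots> \<le> (\<integral>Y. exp (\<Sum>x\<in>?I. \<alpha> x * Y x) \<partial>?M)"
  proof (rule integral_mono)
    show "integrable ?M (indicator B :: _ \<Rightarrow> real)"
      using Bmeas by (intro integrable_real_indicator) (auto simp: less_top[symmetric])
    show "integrable ?M (\<lambda>Y. exp (\<Sum>x\<in>?I. \<alpha> x * Y x))" by (rule prod_mgf(1)[OF s])
  qed (rule ind)
  also have "\<dots> = exp (\<Sum>x\<in>?I. \<alpha> x * \<theta> (snd x) + (\<alpha> x)\<^sup>2 * \<sigma>\<^sup>2 / 2)"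
    by (rule prod_mgf(2)[OF s])
  also have "(\<Sum>x\<in>?I. \<alpha> x * \<theta> (snd x) + (\<alpha> x)\<^sup>2 * \<sigma>\<^sup>2 / 2)
      = (\<Sum>i\<in>J. real (N i) * (coef i * \<theta> i + (coef i)\<^sup>2 * \<sigma>\<^sup>2 / 2))"
  proof -
    have "(\<Sum>x\<in>?I. \<alpha> x * \<theta> (snd x) + (\<alpha> x)\<^sup>2 * \<sigma>\<^sup>2 / 2)
        = (\<Sum>x\<in>?I. (if snd x \<in> J \<and> fst x \<in> A (snd x) then coef (snd x) * \<theta> (snd x) + (coef (snd x))\<^sup>2 * \<sigma>\<^sup>2 / 2 else 0))"
      unfolding \<alpha>_def by (intro sum.cong) auto
    also have "\<dots> = (\<Sum>i\<in>J. \<Sum>s\<in>A i. coef i * \<theta> i + (coef i)\<^sup>2 * \<sigma>\<^sup>2 / 2)"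
      by (rule sumI[OF A J])
    also have "\<dots> = (\<Sum>i\<in>J. real (N i) * (coef i * \<theta> i + (coef i)\<^sup>2 * \<sigma>\<^sup>2 / 2))"
      using N by (intro sum.cong) auto
    finally show ?thesis .
  qed
  also have "(\<Sum>i\<in>J. real (N i) * (coef i * \<theta> i + (coef i)\<^sup>2 * \<sigma>\<^sup>2 / 2))
      \<le> (\<Sum>i\<in>J. k * xx i * \<theta> i + \<nu> * (xx i)\<^sup>2 / (2 * \<sigma>\<^sup>2))"
  proof (rule sum_mono)
    fix i assume i: "i \<in> J"
    show "real (N i) * (coef i * \<theta> i + (coef i)\<^sup>2 * \<sigma>\<^sup>2 / 2) \<le> k * xx i * \<theta> i + \<nu> * (xx i)\<^sup>2 / (2 * \<sigma>\<^sup>2)"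
      unfolding coef_def k_def using term_bound[OF nu _ s, of "real (N i)" "xx i" "\<theta> i"] Nnu i by auto
  qed
  also have "(\<Sum>i\<in>J. k * xx i * \<theta> i + \<nu> * (xx i)\<^sup>2 / (2 * \<sigma>\<^sup>2))
      = k * ((\<Sum>i\<in>J'. bt i * \<theta> i) - Bt * \<theta> b) + \<nu> / (2 * \<sigma>\<^sup>2) * (Bt\<^sup>2 + (\<Sum>i\<in>J'. (bt i)\<^sup>2))"
  proof -
    have "(\<Sum>i\<in>J. k * xx i * \<theta> i + \<nu> * (xx i)\<^sup>2 / (2 * \<sigma>\<^sup>2))
        = (k * xx b * \<theta> b + \<nu> * (xx b)\<^sup>2 / (2 * \<sigma>\<^sup>2)) + (\<Sum>i\<in>J'. k * xx i * \<theta> i + \<nu> * (xx i)\<^sup>2 / (2 * \<sigma>\<^sup>2))"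
      unfolding J'_def using finJ bJ by (simp add: sum.remove)
    also have "(\<Sum>i\<in>J'. k * xx i * \<theta> i + \<nu> * (xx i)\<^sup>2 / (2 * \<sigma>\<^sup>2)) = (\<Sum>i\<in>J'. k * bt i * \<theta> i + \<nu> * (bt i)\<^sup>2 / (2 * \<sigma>\<^sup>2))"
      unfolding xx_def J'_def by (intro sum.cong) auto
    also have "\<dots> = k * (\<Sum>i\<in>J'. bt i * \<theta> i) + \<nu> / (2 * \<sigma>\<^sup>2) * (\<Sum>i\<in>J'. (bt i)\<^sup>2)"
      by (simp add: sum.distrib sum_distrib_left sum_divide_distrib[symmetric] algebra_simps)
    finally have eq: "(\<Sum>i\<in>J. k * xx i * \<theta> i + \<nu> * (xx i)\<^sup>2 / (2 * \<sigma>\<^sup>2))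
        = (k * xx b * \<theta> b + \<nu> * (xx b)\<^sup>2 / (2 * \<sigma>\<^sup>2)) + (k * (\<Sum>i\<in>J'. bt i * \<theta> i) + \<nu> / (2 * \<sigma>\<^sup>2) * (\<Sum>i\<in>J'. (bt i)\<^sup>2))" .
    have xb: "xx b = - Bt" unfolding xx_def by simp
    show ?thesis unfolding eq xb by (simp add: algebra_simps)
  qed
  also have "\<dots> = - \<nu> / (2 * \<sigma>\<^sup>2) * ((\<theta> b - c)\<^sup>2 + (\<Sum>i\<in>J - {b}. (max (c - \<theta> i) 0)\<^sup>2))"
  proof -
    have bti: "bt i * \<theta> i = c * bt i - (bt i)\<^sup>2" for i
      unfolding bt_def by (auto simp: max_def power2_eq_square algebra_simps)
    have "(\<Sum>i\<in>J'. bt i * \<theta> i) = c * Bt - (\<Sum>i\<in>J'. (bt i)\<^sup>2)"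
      unfolding bti Bt_def by (simp add: sum_subtractf sum_distrib_left)
    moreover have "Bt * \<theta> b = c * Bt + Bt * Bt"
    proof -
      have "\<theta> b = c + Bt" using Btc by simp
      then show ?thesis by (simp add: distrib_left mult.commute)
    qed
    ultimately have X: "(\<Sum>i\<in>J'. bt i * \<theta> i) - Bt * \<theta> b = - (Bt\<^sup>2 + (\<Sum>i\<in>J'. (bt i)\<^sup>2))"
      unfolding power2_eq_square by linarith
    define Q where "Q = Bt\<^sup>2 + (\<Sum>i\<in>J'. (bt i)\<^sup>2)"
    have Q: "(\<theta> b - c)\<^sup>2 + (\<Sum>i\<in>J - {b}. (max (c - \<theta> i) 0)\<^sup>2) = Q"
      unfolding Q_def Btc J'_def bt_def ..
    have "k * ((\<Sum>i\<in>J'. bt i * \<theta> i) - Bt * \<theta> b) + \<nu> / (2 * \<sigma>\<^sup>2) * (Bt\<^sup>2 + (\<Sum>i\<in>J'. (bt i)\<^sup>2))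
        = - (\<nu> / \<sigma>\<^sup>2) * Q + \<nu> / (2 * \<sigma>\<^sup>2) * Q" unfolding X k_def Q_def[symmetric] by simp
    also have "\<dots> = - \<nu> / (2 * \<sigma>\<^sup>2) * Q" using s by (simp add: field_simps)
    finally show ?thesis unfolding Q .
  qed
  finally show ?thesis unfolding B_def S_def by simp
qed

lemma best_arm_prop:
  assumes "unique_best K \<theta>"
  shows "best_arm K \<theta> < K \<and> (\<forall>j<K. j \<noteq> best_arm K \<theta> \<longrightarrow> \<theta> j < \<theta> (best_arm K \<theta>))"
proof -
  obtain i where i: "i < K" "\<forall>j<K. j \<noteq> i \<longrightarrow> \<theta> j < \<theta> i" using assms unfolding unique_best_def by auto
  have "best_arm K \<theta> = i" unfolding best_arm_def
  proof (rule the_equality)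
    show "i < K \<and> (\<forall>j<K. j \<noteq> i \<longrightarrow> \<theta> j < \<theta> i)" using i by auto
    fix i' assume h: "i' < K \<and> (\<forall>j<K. j \<noteq> i' \<longrightarrow> \<theta> j < \<theta> i')"
    show "i' = i"
    proof (rule ccontr)
      assume "i' \<noteq> i"
      then have "\<theta> i' < \<theta> i" "\<theta> i < \<theta> i'" using i h by auto
      then show False by simp
    qed
  qed
  then show ?thesis using i by simp
qed

lemma Gamma_le:
  assumes J: "J \<subseteq> {..<K}" "card J = n" "best_arm K \<theta> \<in> J"
  shows "Gamma K \<sigma> \<theta> n \<le> ((\<theta> (best_arm K \<theta>) - c)\<^sup>2 + (\<Sum>i\<in>J - {best_arm K \<theta>}. (max (c - \<theta> i) 0)\<^sup>2)) / (2 * \<sigma>\<^sup>2)"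
proof -
  let ?b = "best_arm K \<theta>"
  let ?Js = "{J. J \<subseteq> {..<K} \<and> card J = n \<and> ?b \<in> J}"
  let ?cost = "\<lambda>J lam. \<Sum>i\<in>J. (lam i - \<theta> i)\<^sup>2 / (2 * \<sigma>\<^sup>2)"
  let ?f = "\<lambda>J. Inf (?cost J ` {lam. \<forall>i\<in>J. lam ?b \<le> lam i})"
  define lam where "lam = (\<lambda>i. if i = ?b then c else max (\<theta> i) c)"
  have finJs: "finite ?Js" by (rule finite_subset[of _ "Pow {..<K}"]) auto
  have "Gamma K \<sigma> \<theta> n = Min (?f ` ?Js)" unfolding Gamma_def ..
  also have "\<dots> \<le> ?f J" using finJs J by (intro Min_le) auto
  also have "?f J \<le> ?cost J lam"
  proof (rule cInf_lower)
    show "?cost J lam \<in> ?cost J ` {lam. \<forall>i\<in>J. lam ?b \<le> lam i}" unfolding lam_def by auto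
    show "bdd_below (?cost J ` {lam. \<forall>i\<in>J. lam ?b \<le> lam i})"
      by (rule bdd_belowI[of _ 0]) (auto intro!: sum_nonneg)
  qed
  also have "?cost J lam = ((\<theta> ?b - c)\<^sup>2 + (\<Sum>i\<in>J - {?b}. (max (c - \<theta> i) 0)\<^sup>2)) / (2 * \<sigma>\<^sup>2)"
  proof -
    have fin: "finite J" using J finite_subset by blast
    have "?cost J lam = (lam ?b - \<theta> ?b)\<^sup>2 / (2 * \<sigma>\<^sup>2) + (\<Sum>i\<in>J - {?b}. (lam i - \<theta> i)\<^sup>2 / (2 * \<sigma>\<^sup>2))"
      using fin J by (simp add: sum.remove)
    also have "(\<Sum>i\<in>J - {?b}. (lam i - \<theta> i)\<^sup>2 / (2 * \<sigma>\<^sup>2)) = (\<Sum>i\<in>J - {?b}. (max (c - \<theta> i) 0)\<^sup>2) / (2 * \<sigma>\<^sup>2)"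
    proof -
      have "(\<Sum>i\<in>J - {?b}. (lam i - \<theta> i)\<^sup>2) = (\<Sum>i\<in>J - {?b}. (max (c - \<theta> i) 0)\<^sup>2)"
        unfolding lam_def by (intro sum.cong) (auto simp: max_def)
      then show ?thesis by (simp add: sum_divide_distrib[symmetric])
    qed
    also have "(lam ?b - \<theta> ?b)\<^sup>2 = (\<theta> ?b - c)\<^sup>2" unfolding lam_def by (simp add: power2_commute)
    finally show ?thesis by (simp add: add_divide_distrib)
  qed
  finally show ?thesis .
qed

lemma setfun_meas:
  assumes fin: "finite C" and f: "\<forall>i\<in>C. f i \<in> borel_measurable M"
  shows "{Y \<in> space M. h {i\<in>C. \<forall>j\<in>C. (f i Y :: real) \<le> f j Y} = x} \<in> sets M"
proof -
  let ?P = "\<lambda>i Y. \<forall>j\<in>C. f i Y \<le> f j Y"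
  have Pm: "{Y \<in> space M. ?P i Y} \<in> sets M" if "i \<in> C" for i
    by (rule sets.sets_Collect_finite_All[OF _ fin]) (use f that in \<open>auto intro: borel_measurable_le\<close>)
  have Am: "{Y \<in> space M. \<forall>i\<in>C. (i \<in> A \<longleftrightarrow> ?P i Y)} \<in> sets M" for A
  proof (rule sets.sets_Collect_finite_All[OF _ fin])
    fix i assume i: "i \<in> C"
    show "{Y \<in> space M. (i \<in> A \<longleftrightarrow> ?P i Y)} \<in> sets M"
    proof (cases "i \<in> A")
      case True then show ?thesis using Pm[OF i] by simp
    next
      case False
      have "{Y \<in> space M. (i \<in> A \<longleftrightarrow> ?P i Y)} = space M - {Y \<in> space M. ?P i Y}" using False by auto
      then show ?thesis using Pm[OF i] by auto
    qed
  qed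
  have eq: "{Y \<in> space M. h {i\<in>C. ?P i Y} = x}
      = (\<Union>A\<in>{A. A \<subseteq> C \<and> h A = x}. {Y \<in> space M. \<forall>i\<in>C. (i \<in> A \<longleftrightarrow> ?P i Y)})"
  proof
    show "{Y \<in> space M. h {i\<in>C. ?P i Y} = x} \<subseteq> (\<Union>A\<in>{A. A \<subseteq> C \<and> h A = x}. {Y \<in> space M. \<forall>i\<in>C. (i \<in> A \<longleftrightarrow> ?P i Y)})"
    proof
      fix Y assume Y: "Y \<in> {Y \<in> space M. h {i\<in>C. ?P i Y} = x}"
      let ?A = "{i\<in>C. ?P i Y}"
      have "?A \<in> {A. A \<subseteq> C \<and> h A = x}" using Y by auto
      moreover have "Y \<in> {Y \<in> space M. \<forall>i\<in>C. (i \<in> ?A \<longleftrightarrow> ?P i Y)}" using Y by auto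
      ultimately show "Y \<in> (\<Union>A\<in>{A. A \<subseteq> C \<and> h A = x}. {Y \<in> space M. \<forall>i\<in>C. (i \<in> A \<longleftrightarrow> ?P i Y)})" by blast
    qed
    show "(\<Union>A\<in>{A. A \<subseteq> C \<and> h A = x}. {Y \<in> space M. \<forall>i\<in>C. (i \<in> A \<longleftrightarrow> ?P i Y)}) \<subseteq> {Y \<in> space M. h {i\<in>C. ?P i Y} = x}"
    proof
      fix Y assume "Y \<in> (\<Union>A\<in>{A. A \<subseteq> C \<and> h A = x}. {Y \<in> space M. \<forall>i\<in>C. (i \<in> A \<longleftrightarrow> ?P i Y)})"
      then obtain A where A: "A \<subseteq> C" "h A = x" "Y \<in> space M" "\<forall>i\<in>C. (i \<in> A \<longleftrightarrow> ?P i Y)" by auto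
      then have "{i\<in>C. ?P i Y} = A" by auto
      then show "Y \<in> {Y \<in> space M. h {i\<in>C. ?P i Y} = x}" using A by auto
    qed
  qed
  have "{A. A \<subseteq> C \<and> h A = x} \<subseteq> Pow C" by auto
  then have "finite {A. A \<subseteq> C \<and> h A = x}" using fin by (meson finite_Pow_iff finite_subset)
  then show ?thesis unfolding eq using Am by (intro sets.finite_UN) auto
qed

lemma density_pos:
  assumes s: "\<sigma> > 0" and S: "S \<in> sets borel" and pos: "emeasure lborel S > 0"
  shows "emeasure (density lborel (normal_density \<mu> \<sigma>)) S > 0"
proof (rule ccontr)
  assume "\<not> ?thesis"
  then have z: "emeasure (density lborel (normal_density \<mu> \<sigma>)) S = 0" by (simp add: not_gr_zero)
  have "emeasure (density lborel (normal_density \<mu> \<sigma>)) S = (\<integral>\<^sup>+ x. ennreal (normal_density \<mu> \<sigma> x) * indicator S x \<partial>lborel)"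
    using S by (subst emeasure_density) auto
  then have "AE x in lborel. ennreal (normal_density \<mu> \<sigma> x) * indicator S x = 0"
    using z S by (subst nn_integral_0_iff_AE[symmetric]) auto
  then have "AE x in lborel. x \<notin> S"
  proof (rule AE_mp)
    show "AE x in lborel. ennreal (normal_density \<mu> \<sigma> x) * indicator S x = 0 \<longrightarrow> x \<notin> S"
    proof (intro AE_I2 impI)
      fix x assume "ennreal (normal_density \<mu> \<sigma> x) * indicator S x = 0"
      moreover have "normal_density \<mu> \<sigma> x > 0" using normal_density_pos[OF s] .
      ultimately show "x \<notin> S" by (auto simp: indicator_def)
    qed
  qed
  then have "emeasure lborel S = 0"
    using S by (subst (asm) AE_iff_measurable[where N = S]) auto
  then show False using pos by simp
qed

locale bae_full = bae_ctx +
  fixes \<sigma> :: real and \<theta> :: "nat \<Rightarrow> real"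
  assumes sig: "\<sigma> > 0" and ub: "unique_best K \<theta>"
begin

abbreviation M where "M \<equiv> outcome_measure K \<sigma> \<theta> T"
abbreviation bst where "bst \<equiv> best_arm K \<theta>"
abbreviation out where "out \<equiv> bae_output ta te K \<beta> T"

lemma bst_lt: "bst < K" using best_arm_prop[OF ub] by auto
lemma bst_max: "j < K \<Longrightarrow> j \<noteq> bst \<Longrightarrow> \<theta> j < \<theta> bst" using best_arm_prop[OF ub] by auto

lemma prob_M: "prob_space M" by (rule prob_outcome[OF sig])

definition Asets :: "(nat \<Rightarrow> nat) \<Rightarrow> nat \<Rightarrow> nat \<Rightarrow> nat set" where
  "Asets p t i = {s. s < t \<and> da p s = i}"

lemma dS_eq: "dS p Y t = (\<lambda>i. \<Sum>s\<in>Asets p t i. Y (s, i))"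
  by (auto simp: dS_def Asets_def)

lemma dC_sub: "dC p u \<subseteq> {..<K}" unfolding dC_def by auto

lemma da_lt: "da p s < K" using da_in dC_sub by blast

lemma Asets_sub: "t \<le> T \<Longrightarrow> Asets p t i \<subseteq> {..<T}" unfolding Asets_def by auto

lemma emp_meas_p: "i < K \<Longrightarrow> t \<le> T \<Longrightarrow> (\<lambda>Y. emp_mean N (dS p Y t) i) \<in> borel_measurable M"
  unfolding dS_eq by (rule emp_meas[where A = "Asets p t i"]) (auto simp: Asets_sub)

lemma J_sub: "J p n \<subseteq> {..<K}" unfolding J_def by auto

definition Bset :: "(nat \<Rightarrow> nat) \<Rightarrow> nat \<Rightarrow> (nat \<times> nat \<Rightarrow> real) set" where
  "Bset p n = {Y \<in> space M. \<forall>j\<in>J p n. emp_mean (dN p (E n)) (dS p Y (E n)) bst \<le> emp_mean (dN p (E n)) (dS p Y (E n)) j}"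

definition Bp :: "(nat \<Rightarrow> nat) \<Rightarrow> nat \<Rightarrow> (nat \<times> nat \<Rightarrow> real) set" where
  "Bp p n = (if valid p \<and> bst \<in> J p n then Bset p n else {})"

lemma Bset_meas: assumes n: "n \<in> {2..K}" shows "Bset p n \<in> sets M"
proof -
  have fin: "finite (J p n)" using J_sub finite_subset by blast
  have m: "(\<lambda>Y. emp_mean (dN p (E n)) (dS p Y (E n)) i) \<in> borel_measurable M" if "i < K" for i
    using that E_le_T[OF n] by (rule emp_meas_p)
  show ?thesis unfolding Bset_def
    by (rule sets.sets_Collect_finite_All[OF _ fin]) (use m J_sub bst_lt in \<open>auto intro!: borel_measurable_le\<close>)
qed

lemma Bp_meas: "n \<in> {2..K} \<Longrightarrow> Bp p n \<in> sets M"
  unfolding Bp_def using Bset_meas by auto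

lemma Bp_bound:
  assumes n: "n \<in> {2..K}" and nu: "real T * wgt K \<beta> n - 2 * real K > 0"
  shows "measure M (Bp p n) \<le> exp (- (real T * wgt K \<beta> n - 2 * real K) * Gamma K \<sigma> \<theta> n)"
proof (cases "valid p \<and> bst \<in> J p n")
  case False
  then have "Bp p n = {}" unfolding Bp_def by auto
  then show ?thesis by simp
next
  case True
  let ?\<nu> = "real T * wgt K \<beta> n - 2 * real K"
  let ?J = "J p n"
  have fin: "finite ?J" using J_sub finite_subset by blast
  obtain c where fp: "c + (\<Sum>i\<in>?J - {bst}. max (c - \<theta> i) 0) = \<theta> bst"
    using fixpoint_exists[of "?J - {bst}" \<theta> "\<theta> bst"] fin by auto
  have A: "\<forall>i\<in>?J. Asets p (E n) i \<subseteq> {..<T}" using Asets_sub E_le_T[OF n] by auto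
  have N: "\<forall>i\<in>?J. dN p (E n) i = card (Asets p (E n) i)" unfolding Asets_def using dN_card by auto
  have Nnu: "\<forall>i\<in>?J. ?\<nu> \<le> real (dN p (E n) i)"
  proof
    fix i assume "i \<in> ?J"
    then have "real T * wgt K \<beta> n - 2 * (real K + 1 - real n) \<le> real (dN p (E n) i)"
      using count_bound[of p n] True n by auto
    then show "?\<nu> \<le> real (dN p (E n) i)" using n by auto
  qed
  have ch: "measure M {Y \<in> space M. \<forall>j\<in>?J. emp_mean (dN p (E n)) (\<lambda>i. \<Sum>s\<in>Asets p (E n) i. Y (s, i)) bst \<le> emp_mean (dN p (E n)) (\<lambda>i. \<Sum>s\<in>Asets p (E n) i. Y (s, i)) j}
     \<le> exp (- ?\<nu> / (2 * \<sigma>\<^sup>2) * ((\<theta> bst - c)\<^sup>2 + (\<Sum>i\<in>?J - {bst}. (max (c - \<theta> i) 0)\<^sup>2)))"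
    by (rule chernoff[OF sig J_sub _ A N nu Nnu fp]) (use True in auto)
  have B: "Bp p n = {Y \<in> space M. \<forall>j\<in>?J. emp_mean (dN p (E n)) (\<lambda>i. \<Sum>s\<in>Asets p (E n) i. Y (s, i)) bst \<le> emp_mean (dN p (E n)) (\<lambda>i. \<Sum>s\<in>Asets p (E n) i. Y (s, i)) j}"
    unfolding Bp_def Bset_def dS_eq using True by simp
  have card: "card ?J = n" using True n unfolding valid_def by auto
  have G: "Gamma K \<sigma> \<theta> n \<le> ((\<theta> bst - c)\<^sup>2 + (\<Sum>i\<in>?J - {bst}. (max (c - \<theta> i) 0)\<^sup>2)) / (2 * \<sigma>\<^sup>2)"
    by (rule Gamma_le[OF J_sub card]) (use True in auto)
  have "- ?\<nu> / (2 * \<sigma>\<^sup>2) * ((\<theta> bst - c)\<^sup>2 + (\<Sum>i\<in>?J - {bst}. (max (c - \<theta> i) 0)\<^sup>2))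
      = - ?\<nu> * (((\<theta> bst - c)\<^sup>2 + (\<Sum>i\<in>?J - {bst}. (max (c - \<theta> i) 0)\<^sup>2)) / (2 * \<sigma>\<^sup>2))" by simp
  also have "\<dots> \<le> - ?\<nu> * Gamma K \<sigma> \<theta> n" using G nu by (intro mult_left_mono_neg) auto
  finally have e: "exp (- ?\<nu> / (2 * \<sigma>\<^sup>2) * ((\<theta> bst - c)\<^sup>2 + (\<Sum>i\<in>?J - {bst}. (max (c - \<theta> i) 0)\<^sup>2))) \<le> exp (- ?\<nu> * Gamma K \<sigma> \<theta> n)"
    by (simp only: exp_le_cancel_iff)
  show ?thesis unfolding B by (rule order_trans[OF ch e])
qed

definition Fxs :: "(nat \<Rightarrow> nat) \<Rightarrow> (nat \<times> nat \<Rightarrow> real) set" where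
  "Fxs p = {Y \<in> space M. \<forall>n\<in>{2..K}. Fx p Y n = p n}"

lemma Fxs_meas: "Fxs p \<in> sets M"
  unfolding Fxs_def
proof (rule sets.sets_Collect_finite_All)
  fix n assume n: "n \<in> {2..K}"
  have fin: "finite (J p n)" using J_sub finite_subset by blast
  have m: "\<forall>i\<in>J p n. (\<lambda>Y. emp_mean (dN p (E n)) (dS p Y (E n)) i) \<in> borel_measurable M"
    using J_sub E_le_T[OF n] emp_meas_p by blast
  show "{Y \<in> space M. Fx p Y n = p n} \<in> sets M"
    unfolding Fx_def am_def using setfun_meas[OF fin m, of "te T (E n)" "p n"] by simp
qed simp

definition P0 :: "(nat \<Rightarrow> nat) set" where
  "P0 = {p. \<forall>n. (n \<in> {2..K} \<longrightarrow> p n \<in> {..<K}) \<and> (n \<notin> {2..K} \<longrightarrow> p n = 0)}"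

lemma P0_fin: "finite P0" unfolding P0_def by (rule finite_set_of_finite_funs) auto

lemma pY_valid: "valid (pY Y)" using fix_valid[OF pY_fix] .

lemma pY_P0: "pY Y \<in> P0"
proof -
  have "pY Y n \<in> {..<K}" if "n \<in> {2..K}" for n
    using pY_valid[of Y] that J_sub unfolding valid_def by blast
  then show ?thesis unfolding P0_def pY_def by auto
qed

lemma in_Fxs: "Y \<in> space M \<Longrightarrow> Y \<in> Fxs (pY Y)"
  unfolding Fxs_def using pY_fix[of Y] by auto

lemma out_fix: "Y \<in> Fxs p \<Longrightarrow> out Y = the_elem (dC p T)"
  unfolding bae_output_def using run_eq[of p Y T] unfolding Fxs_def by auto

lemma out_in: "Y \<in> space M \<Longrightarrow> out Y \<in> dC (pY Y) T"
  using out_fix[OF in_Fxs] valid_out[OF pY_valid] by simp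

lemma out_lt: "Y \<in> space M \<Longrightarrow> out Y < K" using out_in dC_sub by blast

lemma out_meas: "out \<in> measurable M (count_space UNIV)"
proof (subst measurable_count_space_eq2_countable, intro conjI ballI)
  show "out \<in> space M \<rightarrow> UNIV" by simp
  fix a :: nat
  have "out -` {a} \<inter> space M = (\<Union>p\<in>{p\<in>P0. the_elem (dC p T) = a}. Fxs p)"
  proof
    show "out -` {a} \<inter> space M \<subseteq> (\<Union>p\<in>{p\<in>P0. the_elem (dC p T) = a}. Fxs p)"
    proof
      fix Y assume Y: "Y \<in> out -` {a} \<inter> space M"
      then have "Y \<in> Fxs (pY Y)" using in_Fxs by auto
      moreover have "the_elem (dC (pY Y) T) = a" using Y out_fix[OF in_Fxs] by auto
      ultimately show "Y \<in> (\<Union>p\<in>{p\<in>P0. the_elem (dC p T) = a}. Fxs p)" using pY_P0 by blast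
    qed
    show "(\<Union>p\<in>{p\<in>P0. the_elem (dC p T) = a}. Fxs p) \<subseteq> out -` {a} \<inter> space M"
      using out_fix unfolding Fxs_def by auto
  qed
  moreover have "(\<Union>p\<in>{p\<in>P0. the_elem (dC p T) = a}. Fxs p) \<in> sets M"
    using P0_fin Fxs_meas by (intro sets.finite_UN) auto
  ultimately show "out -` {a} \<inter> space M \<in> sets M" by simp
qed

lemma theta_out_meas: "(\<lambda>Y. \<theta> (out Y)) \<in> borel_measurable M"
  by (rule measurable_compose[OF out_meas]) simp

definition Err where "Err = {Y \<in> space M. out Y \<noteq> bst}"

lemma Err_meas: "Err \<in> sets M"
proof -
  have "Err = space M - (out -` {bst} \<inter> space M)" unfolding Err_def by auto
  moreover have "out -` {bst} \<inter> space M \<in> sets M" using out_meas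
    by (simp add: measurable_count_space_eq2_countable)
  ultimately show ?thesis by auto
qed

lemma Err_sub: "Err \<subseteq> (\<Union>p\<in>P0. \<Union>n\<in>{2..K}. Bp p n)"
proof
  fix Y assume Y: "Y \<in> Err"
  then have sp: "Y \<in> space M" unfolding Err_def by auto
  let ?p = "pY Y"
  have v: "valid ?p" by (rule pY_valid)
  have "bst \<in> ?p ` {2..K}"
  proof (rule ccontr)
    assume nb: "bst \<notin> ?p ` {2..K}"
    then have "bst \<in> dC ?p T" unfolding dC_T using bst_lt by auto
    moreover obtain x where "dC ?p T = {x}" using valid_final[OF v] by auto
    moreover have "out Y \<in> dC ?p T" using out_in[OF sp] .
    ultimately have "out Y = bst" by auto
    then show False using Y unfolding Err_def by auto
  qed
  then obtain n where n: "n \<in> {2..K}" "?p n = bst" by auto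
  have Jn: "J ?p n \<noteq> {}" using v n unfolding valid_def by auto
  have "Fx ?p Y n = bst" using pY_fix[of Y] n by auto
  then have "bst \<in> am (J ?p n) (dN ?p (E n)) (dS ?p Y (E n))" using Fx_in[OF Jn, of Y] by simp
  then have "bst \<in> J ?p n \<and> Y \<in> Bset ?p n" unfolding am_def Bset_def using sp by auto
  then have "Y \<in> Bp ?p n" unfolding Bp_def using v by auto
  then show "Y \<in> (\<Union>p\<in>P0. \<Union>n\<in>{2..K}. Bp p n)" using pY_P0 n by blast
qed

lemma Err_bound: "measure M Err \<le> (\<Sum>p\<in>P0. \<Sum>n\<in>{2..K}. measure M (Bp p n))"
proof -
  have U: "(\<Union>n\<in>{2..K}. Bp p n) \<in> sets M" for p using Bp_meas by (intro sets.finite_UN) auto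
  interpret prob_space M by (rule prob_M)
  have UU: "(\<Union>p\<in>P0. \<Union>n\<in>{2..K}. Bp p n) \<in> sets M" using U P0_fin by (rule_tac sets.finite_UN) auto
  have "measure M Err \<le> measure M (\<Union>p\<in>P0. \<Union>n\<in>{2..K}. Bp p n)"
    by (rule finite_measure_mono[OF Err_sub UU])
  also have "\<dots> \<le> (\<Sum>p\<in>P0. measure M (\<Union>n\<in>{2..K}. Bp p n))"
    using U P0_fin by (intro measure_UNION_le) auto
  also have "\<dots> \<le> (\<Sum>p\<in>P0. \<Sum>n\<in>{2..K}. measure M (Bp p n))"
  proof (intro sum_mono measure_UNION_le)
    fix p n assume "n \<in> {2..K}"
    then show "Bp p n \<in> sets M" by (rule Bp_meas)
  qed simp
  finally show ?thesis .
qed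

end

context bae_full begin

abbreviation R where "R \<equiv> bae_regret ta te K \<sigma> \<theta> \<beta> T"

definition Dl where "Dl = \<theta> bst - Min (\<theta> ` {..<K})"
definition dl where "dl = \<theta> bst - Max (\<theta> ` ({..<K} - {bst}))"

lemma Max_theta: "Max (\<theta> ` {..<K}) = \<theta> bst"
proof (rule Max_eqI)
  show "finite (\<theta> ` {..<K})" by simp
  show "y \<le> \<theta> bst" if y: "y \<in> \<theta> ` {..<K}" for y
  proof -
    obtain x where x: "x < K" "y = \<theta> x" using y by auto
    show ?thesis
    proof (cases "x = bst")
      case True with x show ?thesis by simp
    next
      case False with x bst_max[of x] show ?thesis by simp
    qed
  qed
  show "\<theta> bst \<in> \<theta> ` {..<K}" using bst_lt by simp
qed

lemma dl_pos: "dl > 0"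
proof -
  have ne: "{..<K} - {bst} \<noteq> {}"
  proof -
    have "(if bst = 0 then 1 else 0) \<in> {..<K} - {bst}" using K2 by auto
    then show ?thesis by blast
  qed
  have "Max (\<theta> ` ({..<K} - {bst})) \<in> \<theta> ` ({..<K} - {bst})" using ne by (intro Max_in) auto
  then obtain j where "j < K" "j \<noteq> bst" "Max (\<theta> ` ({..<K} - {bst})) = \<theta> j" by auto
  then show ?thesis unfolding dl_def using bst_max by auto
qed

lemma int_out: "integrable M (\<lambda>Y. \<theta> (out Y))"
proof -
  interpret prob_space M by (rule prob_M)
  show ?thesis
  proof (rule integrable_const_bound[where B = "\<Sum>j<K. \<bar>\<theta> j\<bar>"])
    show "AE Y in M. norm (\<theta> (out Y)) \<le> (\<Sum>j<K. \<bar>\<theta> j\<bar>)"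
    proof (rule AE_I2)
      fix Y assume "Y \<in> space M"
      then have "out Y \<in> {..<K}" using out_lt by auto
      then show "norm (\<theta> (out Y)) \<le> (\<Sum>j<K. \<bar>\<theta> j\<bar>)"
        using member_le_sum[of "out Y" "{..<K}" "\<lambda>j. \<bar>\<theta> j\<bar>"] by auto
    qed
    show "(\<lambda>Y. \<theta> (out Y)) \<in> borel_measurable M" by (rule theta_out_meas)
  qed
qed

lemma regret_eq: "R = (\<integral>Y. \<theta> bst - \<theta> (out Y) \<partial>M)"
proof -
  interpret prob_space M by (rule prob_M)
  have "(\<integral>Y. \<theta> bst - \<theta> (out Y) \<partial>M) = (\<integral>Y. \<theta> bst \<partial>M) - (\<integral>Y. \<theta> (out Y) \<partial>M)"
    by (rule Bochner_Integration.integral_diff) (use int_out in auto)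
  also have "(\<integral>Y. \<theta> bst \<partial>M) = \<theta> bst" using prob_space.prob_space[OF prob_M] by simp
  finally show ?thesis unfolding bae_regret_def Max_theta by simp
qed

lemma reg_upper: "R \<le> Dl * measure M Err"
proof -
  interpret prob_space M by (rule prob_M)
  have "(\<integral>Y. \<theta> bst - \<theta> (out Y) \<partial>M) \<le> (\<integral>Y. Dl * indicator Err Y \<partial>M)"
  proof (rule integral_mono)
    show "integrable M (\<lambda>Y. \<theta> bst - \<theta> (out Y))" using int_out by auto
    show "integrable M (\<lambda>Y. Dl * indicator Err Y)"
      using Err_meas by (intro integrable_mult_right integrable_real_indicator) (auto simp: less_top[symmetric])
    fix Y assume Y: "Y \<in> space M"
    show "\<theta> bst - \<theta> (out Y) \<le> Dl * indicator Err Y"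
    proof (cases "out Y = bst")
      case True then show ?thesis by (simp add: Err_def)
    next
      case False
      then have "Y \<in> Err" using Y unfolding Err_def by auto
      moreover have "Min (\<theta> ` {..<K}) \<le> \<theta> (out Y)" using out_lt[OF Y] by (intro Min_le) auto
      ultimately show ?thesis unfolding Dl_def by simp
    qed
  qed
  also have "\<dots> = Dl * measure M Err" using Err_meas by simp
  finally show ?thesis unfolding regret_eq .
qed

lemma reg_lower: "dl * measure M Err \<le> R"
proof -
  interpret prob_space M by (rule prob_M)
  have "(\<integral>Y. dl * indicator Err Y \<partial>M) \<le> (\<integral>Y. \<theta> bst - \<theta> (out Y) \<partial>M)"
  proof (rule integral_mono)
    show "integrable M (\<lambda>Y. \<theta> bst - \<theta> (out Y))" using int_out by auto
    show "integrable M (\<lambda>Y. dl * indicator Err Y)"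
      using Err_meas by (intro integrable_mult_right integrable_real_indicator) (auto simp: less_top[symmetric])
    fix Y assume Y: "Y \<in> space M"
    show "dl * indicator Err Y \<le> \<theta> bst - \<theta> (out Y)"
    proof (cases "out Y = bst")
      case True then show ?thesis by (simp add: Err_def)
    next
      case False
      then have "Y \<in> Err" using Y unfolding Err_def by auto
      moreover have "\<theta> (out Y) \<le> Max (\<theta> ` ({..<K} - {bst}))" using out_lt[OF Y] False by (intro Max_ge) auto
      ultimately show ?thesis unfolding dl_def by simp
    qed
  qed
  also have "(\<integral>Y. dl * indicator Err Y \<partial>M) = dl * measure M Err" using Err_meas by simp
  finally show ?thesis unfolding regret_eq .
qed

lemma reg_nonneg: "R \<ge> 0"
  using reg_lower dl_pos by (meson measure_nonneg order_trans zero_le_mult_iff less_imp_le)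

lemma reg_le_Dl: "R \<le> Dl"
proof -
  interpret prob_space M by (rule prob_M)
  have "Dl \<ge> 0" unfolding Dl_def using bst_lt by (auto intro!: Min_le)
  then have "Dl * measure M Err \<le> Dl * 1" by (intro mult_left_mono) auto
  then show ?thesis using reg_upper by simp
qed

end

lemma ennreal_prod_pos: "finite A \<Longrightarrow> (\<forall>x\<in>A. (0::ennreal) < f x) \<Longrightarrow> 0 < prod f A"
  by (induction A rule: finite_induct) (auto simp: ennreal_zero_less_mult_iff)

context bae_full begin

lemma reg_bound_main:
  assumes nu: "\<forall>n\<in>{2..K}. real T * wgt K \<beta> n - 2 * real K > 0"
  shows "R \<le> Dl * real (card {p. \<forall>n. (n \<in> {2..K} \<longrightarrow> p n \<in> {..<K}) \<and> (n \<notin> {2..K} \<longrightarrow> p n = 0)})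
      * (\<Sum>n\<in>{2..K}. exp (- (real T * wgt K \<beta> n - 2 * real K) * Gamma K \<sigma> \<theta> n))"
proof -
  let ?S = "\<Sum>n\<in>{2..K}. exp (- (real T * wgt K \<beta> n - 2 * real K) * Gamma K \<sigma> \<theta> n)"
  have Dl0: "Dl \<ge> 0" unfolding Dl_def using bst_lt by (auto intro!: Min_le)
  have "measure M Err \<le> (\<Sum>p\<in>P0. \<Sum>n\<in>{2..K}. measure M (Bp p n))" by (rule Err_bound)
  also have "\<dots> \<le> (\<Sum>p\<in>P0. ?S)"
    using Bp_bound nu by (intro sum_mono) auto
  also have "\<dots> = real (card P0) * ?S" by simp
  finally have "Dl * measure M Err \<le> Dl * (real (card P0) * ?S)" using Dl0 by (intro mult_left_mono) auto
  then show ?thesis using reg_upper unfolding P0_def by (simp add: mult.assoc)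
qed

lemma reg_pos:
  assumes big: "real T * wgt K \<beta> K - 2 \<ge> 1"
  shows "R > 0"
proof -
  interpret prob_space M by (rule prob_M)
  let ?I = "{..<T} \<times> {..<K}"
  define Aset :: "nat \<times> nat \<Rightarrow> real set" where
    "Aset = (\<lambda>x. if snd x = bst then {-1<..<0} else {0<..<1})"
  define E0 where "E0 = PiE ?I Aset"
  have E0m: "E0 \<in> sets M"
    unfolding E0_def outcome_eq by (rule sets_PiM_I_finite) (auto simp: sets_Mi Aset_def)
  have em: "emeasure M E0 = (\<Prod>x\<in>?I. emeasure (Mi \<sigma> \<theta> x) (Aset x))"
    unfolding E0_def outcome_eq
    by (rule product_sigma_finite.emeasure_PiM[OF psf[OF sig]]) (auto simp: sets_Mi Aset_def)
  have "emeasure (Mi \<sigma> \<theta> x) (Aset x) > 0" for x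
    unfolding Mi_def Aset_def by (rule density_pos[OF sig]) auto
  then have "emeasure M E0 > 0" unfolding em by (intro ennreal_prod_pos) auto
  moreover have "emeasure M E0 < top" using emeasure_finite[of E0] by (simp add: less_top[symmetric])
  ultimately have mE0: "measure M E0 > 0" unfolding measure_def by (simp add: enn2real_positive_iff)
  have sub: "E0 \<subseteq> Err"
  proof
    fix Y assume Y: "Y \<in> E0"
    then have sp: "Y \<in> space M" using E0m sets.sets_into_space by blast
    let ?p = "pY Y"
    let ?N = "dN ?p (E K)"
    let ?S = "dS ?p Y (E K)"
    have K2': "K \<in> {2..K}" using K2 by auto
    have JK: "J ?p K = {..<K}" unfolding J_def by auto
    have Nge: "real (?N j) \<ge> 1" if "j < K" for j
    proof -
      have "real T * wgt K \<beta> K - 2 * (real K + 1 - real K) \<le> real (?N j)"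
        using count_bound[OF pY_valid K2', of Y] JK that by auto
      then show ?thesis using big by simp
    qed
    have sgn: "(j = bst \<longrightarrow> ?S j < 0) \<and> (j \<noteq> bst \<longrightarrow> ?S j > 0)" if j: "j < K" for j
    proof -
      let ?A = "Asets ?p (E K) j"
      have fin: "finite ?A" using Asets_sub[OF E_le_T[OF K2']] finite_subset by blast
      have "card ?A = ?N j" unfolding Asets_def using dN_card by auto
      then have ne: "?A \<noteq> {}" using Nge[OF j] by auto
      have inI: "(s, j) \<in> ?I" if "s \<in> ?A" for s
        using that Asets_sub[OF E_le_T[OF K2']] j by auto
      have val: "Y (s, j) \<in> Aset (s, j)" if "s \<in> ?A" for s
        using Y inI[OF that] unfolding E0_def by (rule PiE_mem)
      have S: "?S j = (\<Sum>s\<in>?A. Y (s, j))" unfolding dS_eq ..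
      show ?thesis
      proof (intro conjI impI)
        assume "j = bst"
        then have "\<forall>s\<in>?A. 0 < - Y (s, j)" using val unfolding Aset_def by auto
        then have "0 < (\<Sum>s\<in>?A. - Y (s, j))" using fin ne by (intro sum_pos) auto
        then show "?S j < 0" unfolding S by (simp add: sum_negf)
      next
        assume "j \<noteq> bst"
        then have "\<forall>s\<in>?A. 0 < Y (s, j)" using val unfolding Aset_def by auto
        then show "?S j > 0" unfolding S using fin ne by (intro sum_pos) auto
      qed
    qed
    have em_b: "emp_mean ?N ?S bst < 0"
    proof -
      have "?N bst \<noteq> 0" using Nge[OF bst_lt] by auto
      moreover have "real (?N bst) > 0" using Nge[OF bst_lt] by auto
      ultimately show ?thesis unfolding emp_mean_def using sgn[OF bst_lt] by (simp add: divide_neg_pos)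
    qed
    have em_j: "emp_mean ?N ?S j > 0" if "j < K" "j \<noteq> bst" for j
    proof -
      have "?N j \<noteq> 0" using Nge[OF that(1)] by auto
      moreover have "real (?N j) > 0" using Nge[OF that(1)] by auto
      ultimately show ?thesis unfolding emp_mean_def using sgn[OF that(1)] that(2) by simp
    qed
    have amK: "am (J ?p K) ?N ?S = {bst}"
    proof
      show "am (J ?p K) ?N ?S \<subseteq> {bst}"
      proof
        fix i assume i: "i \<in> am (J ?p K) ?N ?S"
        then have "i < K" "emp_mean ?N ?S i \<le> emp_mean ?N ?S bst"
          unfolding am_def JK using bst_lt by auto
        then show "i \<in> {bst}" using em_j em_b by force
      qed
      show "{bst} \<subseteq> am (J ?p K) ?N ?S"
      proof -
        have "\<forall>k\<in>{..<K}. emp_mean ?N ?S bst \<le> emp_mean ?N ?S k"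
        proof
          fix k assume "k \<in> {..<K}"
          then show "emp_mean ?N ?S bst \<le> emp_mean ?N ?S k"
            using em_b em_j[of k] by (cases "k = bst") auto
        qed
        then show ?thesis unfolding am_def JK using bst_lt by auto
      qed
    qed
    have "?p K = Fx ?p Y K" using pY_fix[of Y] K2' by auto
    also have "\<dots> = te T (E K) {bst}" unfolding Fx_def amK ..
    also have "\<dots> = bst" using te_in by auto
    finally have pK: "?p K = bst" .
    have "out Y \<in> dC ?p T" by (rule out_in[OF sp])
    moreover have "bst \<in> ?p ` {2..K}" using pK K2' by (metis image_eqI)
    ultimately have "out Y \<noteq> bst" unfolding dC_T by auto
    then show "Y \<in> Err" unfolding Err_def using sp by auto
  qed
  have "measure M E0 \<le> measure M Err" using sub Err_meas by (intro finite_measure_mono)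
  then have "measure M Err > 0" using mE0 by simp
  then have "dl * measure M Err > 0" using dl_pos by simp
  then show ?thesis using reg_lower by simp
qed

lemma reg_explicit:
  shows "0 \<le> R" and "R \<le> \<theta> bst - Min (\<theta> ` {..<K})"
    and "(\<forall>n\<in>{2..K}. real T * wgt K \<beta> n - 2 * real K > 0) \<Longrightarrow>
       R \<le> (\<theta> bst - Min (\<theta> ` {..<K})) * real (card {p. \<forall>n. (n \<in> {2..K} \<longrightarrow> p n \<in> {..<K}) \<and> (n \<notin> {2..K} \<longrightarrow> p n = 0)})
      * (\<Sum>n\<in>{2..K}. exp (- (real T * wgt K \<beta> n - 2 * real K) * Gamma K \<sigma> \<theta> n))"
    and "real T * wgt K \<beta> K - 2 \<ge> 1 \<Longrightarrow> R > 0"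
  using reg_nonneg reg_le_Dl reg_bound_main reg_pos unfolding Dl_def by auto

end

theorem lemma1:
  fixes K :: nat and \<sigma> :: real and \<theta> \<beta> :: "nat \<Rightarrow> real"
    and ta te :: "nat \<Rightarrow> nat \<Rightarrow> nat set \<Rightarrow> nat"
  assumes "K \<ge> 2" and "\<sigma> > 0" and "unique_best K \<theta>"
    and "\<forall>n\<in>{2..K}. \<beta> n \<ge> 0" and "(\<Sum>n\<in>{2..K}. \<beta> n) = 1"
    and "\<forall>T t A. A \<noteq> {} \<longrightarrow> ta T t A \<in> A"
    and "\<forall>T t A. A \<noteq> {} \<longrightarrow> te T t A \<in> A"
  shows "bae_exponent ta te K \<sigma> \<theta> \<beta> \<ge> ereal (Min ((\<lambda>n. wgt K \<beta> n * Gamma K \<sigma> \<theta> n) ` {2..K}))"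
proof -
  have loc: "bae_full ta te K \<beta> \<sigma> \<theta>"
    using assms by (intro bae_full.intro bae_ctx.intro bae_full_axioms.intro) auto
  define R where "R = (\<lambda>T. bae_regret ta te K \<sigma> \<theta> \<beta> T)"
  define G where "G = Min ((\<lambda>n. wgt K \<beta> n * Gamma K \<sigma> \<theta> n) ` {2..K})"
  define D where "D = \<theta> (best_arm K \<theta>) - Min (\<theta> ` {..<K})"
  define cP where "cP = real (card {p. \<forall>n. (n \<in> {2..K} \<longrightarrow> p n \<in> {..<K}) \<and> (n \<notin> {2..K} \<longrightarrow> p n = (0::nat))})"
  have R0: "0 \<le> R T" for T unfolding R_def using bae_full.reg_explicit(1)[OF loc] .
  have RD: "R T \<le> D" for T unfolding R_def D_def using bae_full.reg_explicit(2)[OF loc] .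
  have Rb: "R T \<le> D * cP * (\<Sum>n\<in>{2..K}. exp (- (real T * wgt K \<beta> n - 2 * real K) * Gamma K \<sigma> \<theta> n))"
    if "\<forall>n\<in>{2..K}. real T * wgt K \<beta> n - 2 * real K > 0" for T
    unfolding R_def D_def cP_def using bae_full.reg_explicit(3)[OF loc that] .
  have Rp: "R T > 0" if "real T * wgt K \<beta> K - 2 \<ge> 1" for T
    unfolding R_def using bae_full.reg_explicit(4)[OF loc that] .
  have fin: "finite ((\<lambda>n. wgt K \<beta> n * Gamma K \<sigma> \<theta> n) ` {2..K})" by simp
  have Gle: "G \<le> wgt K \<beta> n * Gamma K \<sigma> \<theta> n" if "n \<in> {2..K}" for n
    unfolding G_def using fin that by (intro Min_le) auto
  have w0: "wgt K \<beta> n \<ge> 0" if "n \<in> {2..K}" for n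
    unfolding wgt_def using assms(4) that by (intro sum_nonneg) auto
  have ev: "eventually (\<lambda>T. r < - ln (R T) / real T) sequentially" if r: "r < G" for r
  proof (cases "G > 0")
    case False
    then have r0: "r < 0" using r by simp
    obtain N :: nat where N: "real N > \<bar>ln D\<bar> / (- r)" using reals_Archimedean2 by blast
    show ?thesis unfolding eventually_sequentially
    proof (intro exI allI impI)
      fix T assume T: "N \<le> T"
      have h: "\<bar>ln D\<bar> / (- r) < real T" using N T by linarith
      have mr: "- r > 0" using r0 by simp
      have "\<bar>ln D\<bar> < real T * (- r)" using h unfolding pos_divide_less_eq[OF mr] .
      then have lt: "\<bar>ln D\<bar> < - r * real T" by (simp add: mult.commute)
      have Tp: "real T > 0"
      proof (rule ccontr)
        assume "\<not> real T > 0" then have "real T = 0" by simp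
        then show False using lt by simp
      qed
      show "r < - ln (R T) / real T"
      proof (cases "R T = 0")
        case True
        then show ?thesis using r0 by simp
      next
        case False
        then have Rpos: "R T > 0" using R0[of T] by simp
        have "ln (R T) \<le> ln D" using Rpos RD[of T] by (intro ln_mono) auto
        then have "- ln (R T) > r * real T" using lt by linarith
        then show ?thesis unfolding pos_less_divide_eq[OF Tp] by simp
      qed
    qed
  next
    case True
    have wpos: "wgt K \<beta> n > 0" if "n \<in> {2..K}" for n
    proof -
      have "wgt K \<beta> n * Gamma K \<sigma> \<theta> n > 0" using Gle[OF that] True by simp
      then have "wgt K \<beta> n \<noteq> 0" by auto
      then show ?thesis using w0[OF that] by simp
    qed
    define wm where "wm = Min (wgt K \<beta> ` {2..K})"
    have wm: "wm > 0" unfolding wm_def using wpos assms(1) by (subst Min_gr_iff) auto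
    have wmle: "wm \<le> wgt K \<beta> n" if "n \<in> {2..K}" for n unfolding wm_def using that by (intro Min_le) auto
    define C where "C = D * cP * (\<Sum>n\<in>{2..K}. exp (2 * real K * Gamma K \<sigma> \<theta> n))"
    obtain N1 :: nat where N1: "real N1 > (2 * real K + 3) / wm" using reals_Archimedean2 by blast
    obtain N2 :: nat where N2: "real N2 > \<bar>ln C\<bar> / (G - r)" using reals_Archimedean2 by blast
    show ?thesis unfolding eventually_sequentially
    proof (intro exI allI impI)
      fix T assume T: "max N1 N2 \<le> T"
      have TN1: "real T > (2 * real K + 3) / wm" using N1 T by simp
      then have Twm: "real T * wm > 2 * real K + 3" using wm by (simp add: divide_less_eq)
      have Tw: "real T * wgt K \<beta> n > 2 * real K + 3" if "n \<in> {2..K}" for n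
      proof -
        have "real T * wm \<le> real T * wgt K \<beta> n" using wmle[OF that] by (intro mult_left_mono) auto
        then show ?thesis using Twm by linarith
      qed
      have Tp: "real T > 0"
      proof (rule ccontr)
        assume "\<not> real T > 0" then have "real T = 0" by simp
        then show False using Twm by simp
      qed
      have c1: "\<forall>n\<in>{2..K}. real T * wgt K \<beta> n - 2 * real K > 0" using Tw by force
      have c2: "real T * wgt K \<beta> K - 2 \<ge> 1" using Tw[of K] assms(1) by auto
      have Rpos: "R T > 0" using Rp[OF c2] .
      have DcP: "D * cP \<ge> 0"
      proof -
        have "D \<ge> 0" unfolding D_def using best_arm_prop[OF assms(3)] by (auto intro!: Min_le)
        then show ?thesis unfolding cP_def by simp
      qed
      have "R T \<le> D * cP * (\<Sum>n\<in>{2..K}. exp (- (real T * wgt K \<beta> n - 2 * real K) * Gamma K \<sigma> \<theta> n))"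
        by (rule Rb[OF c1])
      also have "\<dots> \<le> D * cP * (\<Sum>n\<in>{2..K}. exp (2 * real K * Gamma K \<sigma> \<theta> n) * exp (- G * real T))"
      proof (intro mult_left_mono[OF _ DcP] sum_mono)
        fix n assume n: "n \<in> {2..K}"
        have "exp (- (real T * wgt K \<beta> n - 2 * real K) * Gamma K \<sigma> \<theta> n)
            = exp (2 * real K * Gamma K \<sigma> \<theta> n) * exp (- (real T * (wgt K \<beta> n * Gamma K \<sigma> \<theta> n)))"
          by (simp add: exp_add[symmetric] algebra_simps)
        also have "\<dots> \<le> exp (2 * real K * Gamma K \<sigma> \<theta> n) * exp (- G * real T)"
        proof -
          have "real T * G \<le> real T * (wgt K \<beta> n * Gamma K \<sigma> \<theta> n)" using Gle[OF n] Tp by (intro mult_left_mono) auto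
          then show ?thesis by (simp add: mult.commute)
        qed
        finally show "exp (- (real T * wgt K \<beta> n - 2 * real K) * Gamma K \<sigma> \<theta> n)
            \<le> exp (2 * real K * Gamma K \<sigma> \<theta> n) * exp (- G * real T)" .
      qed
      also have "\<dots> = C * exp (- G * real T)"
        unfolding C_def by (simp add: sum_distrib_right mult.assoc)
      finally have RC: "R T \<le> C * exp (- G * real T)" .
      then have "C * exp (- G * real T) > 0" using Rpos by linarith
      then have Cp: "C > 0" by (simp add: zero_less_mult_iff)
      have "ln (R T) \<le> ln (C * exp (- G * real T))" using Rpos RC by (intro ln_mono) auto
      also have "\<dots> = ln C - G * real T" using Cp by (simp add: ln_mult)
      finally have lnR: "ln (R T) \<le> ln C - G * real T" .
      have "\<bar>ln C\<bar> / (G - r) < real T" using N2 T by linarith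
      then have "\<bar>ln C\<bar> < (G - r) * real T" using r by (simp add: divide_less_eq mult.commute)
      moreover have "(G - r) * real T = G * real T - r * real T" by (simp add: left_diff_distrib)
      moreover have "ln C \<le> \<bar>ln C\<bar>" by simp
      ultimately have "- ln (R T) > r * real T" using lnR by linarith
      then show "r < - ln (R T) / real T" unfolding pos_less_divide_eq[OF Tp] by simp
    qed
  qed
  have "ereal G \<le> liminf (\<lambda>T. ereal (- ln (R T) / real T))"
  proof (subst le_Liminf_iff, intro allI impI)
    fix y assume y: "y < ereal G"
    show "eventually (\<lambda>T. y < ereal (- ln (R T) / real T)) sequentially"
    proof (cases y)
      case (real r)
      then have "r < G" using y by simp
      then show ?thesis using ev[of r] real by (auto elim: eventually_mono)
    next
      case PInf then show ?thesis using y by simp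
    next
      case MInf then show ?thesis by simp
    qed
  qed
  then show ?thesis unfolding bae_exponent_def R_def G_def by simp
qed

end
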